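(* Let $S$ be a DRC-semigroup, with projection algebra $\mathbf P(S)$, category $\mathcal C(S)$ and map $\varepsilon(S):\mathcal C(\mathbf P(S))\to\mathcal C(S)$, $[p_1,\dots,p_k]\mapsto p_1p_2\cdots p_k$ (product in $S$). Then $(\mathbf P(S),\mathcal C(S),\varepsilon(S))$ is a chained projection category, and the assignment $S\mapsto(\mathbf P(S),\mathcal C(S),\varepsilon(S))$, $\phi\mapsto\phi$ is a functor $\mathbf{DRC}\to\mathbf{CPC}$ (i.e.\ every DRC-morphism $S\to S'$ is a chained projection functor between the corresponding triples).
   Context: \textbf{DRC-semigroups.} A DRC-semigroup is an algebra $(S,\cdot,D,R)$ where $(S,\cdot)$ is a semigroup and $D,R:S\to S$ satisfy, for all $a,b$: $D(a)a=a$, $aR(a)=a$; $D(ab)=D(aD(b))$, $R(ab)=R(R(a)b)$; $D(ab)=D(a)D(ab)D(a)$, $R(ab)=R(b)R(ab)R(b)$; $R(D(a))=D(a)$, $D(R(a))=R(a)$. DRC-morphisms preserve $\cdot,D,R$; $\mathbf{DRC}$ is the resulting category. The projections are $\mathbf P(S)=\{D(a):a\in S\}=\{p\in S:p^2=p=D(p)=R(p)\}$, made into a projection algebra by $q\theta_p=R(qp)$, $q\delta_p=D(pq)$. The category $\mathcal C(S)$ has morphism set $S$, object set $\mathbf P(S)$, $\mathbf d(a)=D(a)$, $\mathbf r(a)=R(a)$, $a\circ b=ab$ when $R(a)=D(b)$; for $p\le D(a)$ and $q\le R(a)$ (order on $\mathbf P(S)$: $p\le q\iff p=pq=qp$) left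 and right restrictions are ${}_p\lfloor a=pa$ and $a\rfloor_q=aq$, and $a\le_l b\iff a={}_{D(a)}\lfloor b$, $a\le_r b\iff a=b\rfloor_{R(a)}$. \textbf{Projection algebras.} Maps are written on the right and composed left to right. A projection algebra is a set $P$ with maps $\theta_p,\delta_p:P\to P$ ($p\in P$) such that for all $p,q$: $p\theta_p=p$, $p\delta_p=p$; $p\theta_{q\theta_p}=q\theta_p$, $p\delta_{q\delta_p}=q\delta_p$; $\theta_q\theta_{q\theta_p}=\theta_q\theta_p$, $\delta_q\delta_{q\delta_p}=\delta_q\delta_p$; $\theta_p\delta_p=\theta_p$, $\delta_p\theta_p=\delta_p$; $\theta_{p\delta_q}\theta_p=\theta_q\theta_p$, $\delta_{p\theta_q}\delta_p=\delta_q\delta_p$. Order: $p\le q\iff p=p\theta_q$. Relation: $p\,\mathscr F\,q\iff p=q\delta_p$ and $q=p\theta_q$. Projection algebra morphisms preserve all $\theta$ and $\delta$ operations. \textbf{Biordered categories.} A small category is identified with its morphisms, objects with identities ($v\mathcal C$); $\mathbf d,\mathbf r$ domain/codomain, $a\circ b$ defined iff $\mathbf r(a)=\mathbf d(b)$. A left-ordered category is $(\mathcal C,\le)$, $\le$ a partial order with: $a\le b\Rightarrow \mathbf d(a)\le\mathbf d(b),\mathbf r(a)\le\mathbf r(b)$; $a\le b,c\le c'$ with $a\circ c,b\circ c'$ defined $\Rightarrow a\circ c\le b\circ c'$; for each object $p\le\mathbf d(a)$ a unique $u\le a$ with $\mathbf d(u)=p$ (denoted ${}_p\lfloor a$). Right-ordered: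 dually, unique $v\le a$ with $\mathbf r(v)=q$ for object $q\le\mathbf r(a)$ (denoted $a\rfloor_q$). A biordered category $(\mathcal C,\le_l,\le_r)$ is left-ordered under $\le_l$, right-ordered under $\le_r$, with $\le_l,\le_r$ equal on $v\mathcal C$. Biordered morphisms are functors preserving both orders. $t^\downarrow=\{s:s\le t\}$, $\mathcal C(q,r)=\{a:\mathbf d(a)=q,\mathbf r(a)=r\}$. \textbf{Projection categories.} A weak projection category $(P,\mathcal C)$: $\mathcal C$ biordered, $P=v\mathcal C$ a projection algebra whose order is the restriction of $\le_l$ and of $\le_r$. For $a\in\mathcal C$: $\vartheta_a:\mathbf d(a)^\downarrow\to\mathbf r(a)^\downarrow$, $p\vartheta_a=\mathbf r({}_p\lfloor a)$; $\vartheta'_a:\mathbf r(a)^\downarrow\to\mathbf d(a)^\downarrow$, $q\vartheta'_a=\mathbf d(a\rfloor_q)$; $\Theta_a=\theta_{\mathbf d(a)}\vartheta_a$, $\Delta_a=\delta_{\mathbf r(a)}\vartheta'_a$ (maps $P\to P$). A projection category additionally satisfies (C1): $\Theta_{a\rfloor_q}=\Theta_a\theta_q$ and $\Delta_{{}_p\lfloor a}=\Delta_a\delta_p$ for $p\le\mathbf d(a)$, $q\le\mathbf r(a)$. \textbf{Chain category.} Paths of $P$: tuples $(p_1,\dots,p_k)$ with $p_1\mathscr F p_2\mathscr F\cdots\mathscr F p_k$, $\mathbf d=p_1,\mathbf r=p_k$, composition $(p_1,\dots,p_k)\circ(p_k,\dots,p_l)=(p_1,\dots,p_l)$; restrictions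 ${}_q\lfloor(p_1,\dots,p_k)=(q_1,\dots,q_k)$ with $q_1=q\le p_1$, $q_i=q_{i-1}\theta_{p_i}$, and $(p_1,\dots,p_k)\rfloor_r=(r_1,\dots,r_k)$ with $r_k=r\le p_k$, $r_i=r_{i+1}\delta_{p_i}$; this is a biordered category. The chain category $\mathcal C(P)$ is its quotient by the congruence generated by $(p,p)\approx(p)$, a biordered category with elements $[p_1,\dots,p_k]$ and object set $P$. \textbf{Chained projection categories.} An evaluation map is a biordered functor $\varepsilon:\mathcal C(P)\to\mathcal C$ with $\varepsilon[p]=p$. For $b\in\mathcal C(q,r)$, $p,s\in P$ let $e=s\Delta_b\delta_p$, $e_1=s\Delta_b\delta_{p\theta_q}$, $e_2=p\theta_{s\Delta_b}$, $f=p\Theta_b\theta_s$, $f_1=s\delta_{p\Theta_b}$, $f_2=p\Theta_b\theta_{s\delta_r}$ (then $e\mathscr F e_1$, $e\mathscr F e_2$, $f_1\mathscr F f$, $f_2\mathscr F f$ and the following are defined), $\lambda(p,b,s)=\varepsilon[e,e_1]\circ({}_{p\theta_q}\lfloor b)\rfloor_{f_1}\circ\varepsilon[f_1,f]$, $\rho(p,b,s)=\varepsilon[e,e_2]\circ{}_{e_2}\lfloor(b\rfloor_{s\delta_r})\circ\varepsilon[f_2,f]$. A chained projection category is $(P,\mathcal C,\varepsilon)$ with $(P,\mathcal C)$ a projection category, $\varepsilon$ an evaluation map, and (C2) $\lambda(p,b,s)=\rho(p,b,s)$ for all $b,p,s$. Chained projection functors are biordered morphisms $\phi$ whose object restriction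 is a projection algebra morphism and with $(\varepsilon[p_1,\dots,p_k])\phi=\varepsilon'[p_1\phi,\dots,p_k\phi]$; $\mathbf{CPC}$ is the resulting category. *)

theory Defs
  imports Main
begin

definition drc :: "'a set \<Rightarrow> ('a \<Rightarrow> 'a \<Rightarrow> 'a) \<Rightarrow> ('a \<Rightarrow> 'a) \<Rightarrow> ('a \<Rightarrow> 'a) \<Rightarrow> bool" where
  "drc S m D R \<longleftrightarrow>
     (\<forall>a\<in>S. \<forall>b\<in>S. m a b \<in> S) \<and> (\<forall>a\<in>S. D a \<in> S \<and> R a \<in> S) \<and>
     (\<forall>a\<in>S. \<forall>b\<in>S. \<forall>c\<in>S. m (m a b) c = m a (m b c)) \<and>
     (\<forall>a\<in>S. m (D a) a = a \<and> m a (R a) = a) \<and>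
     (\<forall>a\<in>S. \<forall>b\<in>S. D (m a b) = D (m a (D b)) \<and> R (m a b) = R (m (R a) b)) \<and>
     (\<forall>a\<in>S. \<forall>b\<in>S. D (m a b) = m (m (D a) (D (m a b))) (D a) \<and>
                    R (m a b) = m (m (R b) (R (m a b))) (R b)) \<and>
     (\<forall>a\<in>S. R (D a) = D a \<and> D (R a) = R a)"

definition drc_morphism ::
  "'a set \<Rightarrow> ('a \<Rightarrow> 'a \<Rightarrow> 'a) \<Rightarrow> ('a \<Rightarrow> 'a) \<Rightarrow> ('a \<Rightarrow> 'a) \<Rightarrow>
   'b set \<Rightarrow> ('b \<Rightarrow> 'b \<Rightarrow> 'b) \<Rightarrow> ('b \<Rightarrow> 'b) \<Rightarrow> ('b \<Rightarrow> 'b) \<Rightarrow> ('a \<Rightarrow> 'b) \<Rightarrow> bool" where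
  "drc_morphism S m D R S' m' D' R' \<phi> \<longleftrightarrow>
     (\<forall>a\<in>S. \<phi> a \<in> S') \<and>
     (\<forall>a\<in>S. \<forall>b\<in>S. \<phi> (m a b) = m' (\<phi> a) (\<phi> b)) \<and>
     (\<forall>a\<in>S. \<phi> (D a) = D' (\<phi> a) \<and> \<phi> (R a) = R' (\<phi> a))"

text \<open>\<open>th P p q\<close> is \<open>q \<theta>_p\<close> and \<open>dl P p q\<close> is \<open>q \<delta>_p\<close> (maps written on the right).\<close>

record 'p projalg =
  pcar :: "'p set"
  th :: "'p \<Rightarrow> 'p \<Rightarrow> 'p"
  dl :: "'p \<Rightarrow> 'p \<Rightarrow> 'p"

definition projection_algebra :: "'p projalg \<Rightarrow> bool" where
  "projection_algebra P \<longleftrightarrow>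
    (\<forall>p\<in>pcar P. \<forall>x\<in>pcar P. th P p x \<in> pcar P \<and> dl P p x \<in> pcar P) \<and>
    (\<forall>p\<in>pcar P. th P p p = p \<and> dl P p p = p) \<and>
    (\<forall>p\<in>pcar P. \<forall>q\<in>pcar P.
       th P (th P p q) p = th P p q \<and> dl P (dl P p q) p = dl P p q) \<and>
    (\<forall>p\<in>pcar P. \<forall>q\<in>pcar P. \<forall>x\<in>pcar P.
       th P (th P p q) (th P q x) = th P p (th P q x) \<and>
       dl P (dl P p q) (dl P q x) = dl P p (dl P q x)) \<and>
    (\<forall>p\<in>pcar P. \<forall>x\<in>pcar P.
       dl P p (th P p x) = th P p x \<and> th P p (dl P p x) = dl P p x) \<and>
    (\<forall>p\<in>pcar P. \<forall>q\<in>pcar P. \<forall>x\<in>pcar P.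
       th P p (th P (dl P q p) x) = th P p (th P q x) \<and>
       dl P p (dl P (th P q p) x) = dl P p (dl P q x))"

definition pa_le :: "'p projalg \<Rightarrow> 'p \<Rightarrow> 'p \<Rightarrow> bool" where
  "pa_le P p q \<longleftrightarrow> p = th P q p"

definition pa_F :: "'p projalg \<Rightarrow> 'p \<Rightarrow> 'p \<Rightarrow> bool" where
  "pa_F P p q \<longleftrightarrow> p = dl P p q \<and> q = th P q p"

definition projalg_morphism :: "'p projalg \<Rightarrow> 'q projalg \<Rightarrow> ('p \<Rightarrow> 'q) \<Rightarrow> bool" where
  "projalg_morphism P P' f \<longleftrightarrow>
     (\<forall>p\<in>pcar P. f p \<in> pcar P') \<and>
     (\<forall>p\<in>pcar P. \<forall>q\<in>pcar P. f (th P p q) = th P' (f p) (f q) \<and> f (dl P p q) = dl P' (f p) (f q))"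

text \<open>A small category given by its set of morphisms; objects are identities.
  \<open>ccomp C a b\<close> is \<open>a \<circ> b\<close> (first \<open>a\<close>, then \<open>b\<close>), meaningful when \<open>ccod C a = cdom C b\<close>.\<close>

record 'm bicat =
  mor :: "'m set"
  cdom :: "'m \<Rightarrow> 'm"
  ccod :: "'m \<Rightarrow> 'm"
  ccomp :: "'m \<Rightarrow> 'm \<Rightarrow> 'm"
  lle :: "'m \<Rightarrow> 'm \<Rightarrow> bool"
  rle :: "'m \<Rightarrow> 'm \<Rightarrow> bool"

definition obj :: "('m, 'z) bicat_scheme \<Rightarrow> 'm set" where
  "obj C = {a \<in> mor C. cdom C a = a}"

definition category :: "('m, 'z) bicat_scheme \<Rightarrow> bool" where
  "category C \<longleftrightarrow>
    (\<forall>a\<in>mor C. cdom C a \<in> mor C \<and> ccod C a \<in> mor C \<and>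
        cdom C (cdom C a) = cdom C a \<and> ccod C (cdom C a) = cdom C a \<and>
        cdom C (ccod C a) = ccod C a \<and> ccod C (ccod C a) = ccod C a \<and>
        ccomp C (cdom C a) a = a \<and> ccomp C a (ccod C a) = a) \<and>
    (\<forall>a\<in>mor C. \<forall>b\<in>mor C. ccod C a = cdom C b \<longrightarrow>
        ccomp C a b \<in> mor C \<and> cdom C (ccomp C a b) = cdom C a \<and> ccod C (ccomp C a b) = ccod C b) \<and>
    (\<forall>a\<in>mor C. \<forall>b\<in>mor C. \<forall>c\<in>mor C. ccod C a = cdom C b \<longrightarrow> ccod C b = cdom C c \<longrightarrow>
        ccomp C (ccomp C a b) c = ccomp C a (ccomp C b c))"

definition partial_order_on' :: "'m set \<Rightarrow> ('m \<Rightarrow> 'm \<Rightarrow> bool) \<Rightarrow> bool" where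
  "partial_order_on' A le \<longleftrightarrow>
    (\<forall>a b. le a b \<longrightarrow> a \<in> A \<and> b \<in> A) \<and> (\<forall>a\<in>A. le a a) \<and>
    (\<forall>a b. le a b \<longrightarrow> le b a \<longrightarrow> a = b) \<and> (\<forall>a b c. le a b \<longrightarrow> le b c \<longrightarrow> le a c)"

definition left_ordered :: "('m, 'z) bicat_scheme \<Rightarrow> ('m \<Rightarrow> 'm \<Rightarrow> bool) \<Rightarrow> bool" where
  "left_ordered C le \<longleftrightarrow> category C \<and> partial_order_on' (mor C) le \<and>
    (\<forall>a b. le a b \<longrightarrow> le (cdom C a) (cdom C b) \<and> le (ccod C a) (ccod C b)) \<and>
    (\<forall>a b c c'. le a b \<longrightarrow> le c c' \<longrightarrow> ccod C a = cdom C c \<longrightarrow> ccod C b = cdom C c' \<longrightarrow>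
        le (ccomp C a c) (ccomp C b c')) \<and>
    (\<forall>a\<in>mor C. \<forall>p\<in>obj C. le p (cdom C a) \<longrightarrow> (\<exists>!u. u \<in> mor C \<and> le u a \<and> cdom C u = p))"

definition right_ordered :: "('m, 'z) bicat_scheme \<Rightarrow> ('m \<Rightarrow> 'm \<Rightarrow> bool) \<Rightarrow> bool" where
  "right_ordered C le \<longleftrightarrow> category C \<and> partial_order_on' (mor C) le \<and>
    (\<forall>a b. le a b \<longrightarrow> le (cdom C a) (cdom C b) \<and> le (ccod C a) (ccod C b)) \<and>
    (\<forall>a b c c'. le a b \<longrightarrow> le c c' \<longrightarrow> ccod C a = cdom C c \<longrightarrow> ccod C b = cdom C c' \<longrightarrow>
        le (ccomp C a c) (ccomp C b c')) \<and>
    (\<forall>a\<in>mor C. \<forall>q\<in>obj C. le q (ccod C a) \<longrightarrow> (\<exists>!v. v \<in> mor C \<and> le v a \<and> ccod C v = q))"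

definition biordered :: "('m, 'z) bicat_scheme \<Rightarrow> bool" where
  "biordered C \<longleftrightarrow> left_ordered C (lle C) \<and> right_ordered C (rle C) \<and>
     (\<forall>p\<in>obj C. \<forall>q\<in>obj C. lle C p q \<longleftrightarrow> rle C p q)"

definition lrest :: "('m, 'z) bicat_scheme \<Rightarrow> 'm \<Rightarrow> 'm \<Rightarrow> 'm" where
  "lrest C p a = (THE u. u \<in> mor C \<and> lle C u a \<and> cdom C u = p)"

definition rrest :: "('m, 'z) bicat_scheme \<Rightarrow> 'm \<Rightarrow> 'm \<Rightarrow> 'm" where
  "rrest C a q = (THE v. v \<in> mor C \<and> rle C v a \<and> ccod C v = q)"

definition biordered_functor :: "('m, 'z) bicat_scheme \<Rightarrow> ('n, 'y) bicat_scheme \<Rightarrow> ('m \<Rightarrow> 'n) \<Rightarrow> bool" where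
  "biordered_functor C C' f \<longleftrightarrow>
    (\<forall>a\<in>mor C. f a \<in> mor C' \<and> f (cdom C a) = cdom C' (f a) \<and> f (ccod C a) = ccod C' (f a)) \<and>
    (\<forall>a\<in>mor C. \<forall>b\<in>mor C. ccod C a = cdom C b \<longrightarrow> f (ccomp C a b) = ccomp C' (f a) (f b)) \<and>
    (\<forall>a b. lle C a b \<longrightarrow> lle C' (f a) (f b)) \<and>
    (\<forall>a b. rle C a b \<longrightarrow> rle C' (f a) (f b))"

definition weak_projection_category :: "'m projalg \<Rightarrow> ('m, 'z) bicat_scheme \<Rightarrow> bool" where
  "weak_projection_category P C \<longleftrightarrow> biordered C \<and> projection_algebra P \<and> pcar P = obj C \<and>
     (\<forall>p\<in>pcar P. \<forall>q\<in>pcar P. (pa_le P p q \<longleftrightarrow> lle C p q) \<and> (pa_le P p q \<longleftrightarrow> rle C p q))"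

text \<open>\<open>Theta P C a x = x \<Theta>_a = x \<theta>_{d(a)} \<vartheta>_a\<close>, \<open>Delta P C a x = x \<Delta>_a = x \<delta>_{r(a)} \<vartheta>'_a\<close>.\<close>

definition Theta :: "'m projalg \<Rightarrow> ('m, 'z) bicat_scheme \<Rightarrow> 'm \<Rightarrow> 'm \<Rightarrow> 'm" where
  "Theta P C a x = ccod C (lrest C (th P (cdom C a) x) a)"

definition Delta :: "'m projalg \<Rightarrow> ('m, 'z) bicat_scheme \<Rightarrow> 'm \<Rightarrow> 'm \<Rightarrow> 'm" where
  "Delta P C a x = cdom C (rrest C a (dl P (ccod C a) x))"

definition projection_category :: "'m projalg \<Rightarrow> ('m, 'z) bicat_scheme \<Rightarrow> bool" where
  "projection_category P C \<longleftrightarrow> weak_projection_category P C \<and>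
    (\<forall>a\<in>mor C. \<forall>q\<in>pcar P. pa_le P q (ccod C a) \<longrightarrow>
        (\<forall>x\<in>pcar P. Theta P C (rrest C a q) x = th P q (Theta P C a x))) \<and>
    (\<forall>a\<in>mor C. \<forall>p\<in>pcar P. pa_le P p (cdom C a) \<longrightarrow>
        (\<forall>x\<in>pcar P. Delta P C (lrest C p a) x = dl P p (Delta P C a x)))"

text \<open>The congruence generated
  by \<open>(p,p) \<approx> (p)\<close> identifies a path with the path obtained by removing adjacent repetitions,
  and each class has a unique reduced representative (\<open>remdups_adj\<close>). We represent the
  chain \<open>[p\<^sub>1,\<dots>,p\<^sub>k]\<close> by this reduced representative \<open>chn [p\<^sub>1,\<dots>,p\<^sub>k]\<close>;
  the object \<open>p\<close> of \<open>\<C>(P)\<close> is \<open>[p]\<close>.\<close>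

definition is_path :: "'p projalg \<Rightarrow> 'p list \<Rightarrow> bool" where
  "is_path P ps \<longleftrightarrow> ps \<noteq> [] \<and> set ps \<subseteq> pcar P \<and> successively (pa_F P) ps"

definition chn :: "'p list \<Rightarrow> 'p list" where
  "chn ps = remdups_adj ps"

fun lpath :: "'p projalg \<Rightarrow> 'p \<Rightarrow> 'p list \<Rightarrow> 'p list" where
  "lpath P q [] = []"
| "lpath P q (p # ps) = th P p q # lpath P (th P p q) ps"

fun lpathD :: "'p projalg \<Rightarrow> 'p \<Rightarrow> 'p list \<Rightarrow> 'p list" where
  "lpathD P r [] = []"
| "lpathD P r (p # ps) = dl P p r # lpathD P (dl P p r) ps"

text \<open>\<open>rpath P r ps\<close>: \<open>r\<^sub>k = r \<delta>_{p\<^sub>k}\<close> (\<open>= r\<close> when \<open>r \<le> p\<^sub>k\<close>), \<open>r\<^sub>i = r\<^sub>i\<^sub>+\<^sub>1 \<delta>_{p\<^sub>i}\<close>.\<close>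

definition rpath :: "'p projalg \<Rightarrow> 'p \<Rightarrow> 'p list \<Rightarrow> 'p list" where
  "rpath P r ps = rev (lpathD P r (rev ps))"

definition chain_cat :: "'p projalg \<Rightarrow> 'p list bicat" where
  "chain_cat P =
    \<lparr> mor = {ps. is_path P ps \<and> chn ps = ps},
      cdom = (\<lambda>ps. [hd ps]),
      ccod = (\<lambda>ps. [last ps]),
      ccomp = (\<lambda>ps qs. chn (ps @ tl qs)),
      lle = (\<lambda>ps qs. is_path P ps \<and> chn ps = ps \<and> is_path P qs \<and> chn qs = qs \<and>
                     pa_le P (hd ps) (hd qs) \<and> ps = chn (lpath P (hd ps) qs)),
      rle = (\<lambda>ps qs. is_path P ps \<and> chn ps = ps \<and> is_path P qs \<and> chn qs = qs \<and>
                     pa_le P (last ps) (last qs) \<and> ps = chn (rpath P (last ps) qs)) \<rparr>"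

definition evaluation_map :: "'m projalg \<Rightarrow> ('m, 'z) bicat_scheme \<Rightarrow> ('m list \<Rightarrow> 'm) \<Rightarrow> bool" where
  "evaluation_map P C \<epsilon> \<longleftrightarrow> biordered_functor (chain_cat P) C \<epsilon> \<and> (\<forall>p\<in>pcar P. \<epsilon> [p] = p)"

definition lam :: "'m projalg \<Rightarrow> ('m, 'z) bicat_scheme \<Rightarrow> ('m list \<Rightarrow> 'm) \<Rightarrow> 'm \<Rightarrow> 'm \<Rightarrow> 'm \<Rightarrow> 'm" where
  "lam P C \<epsilon> p b s =
    (let q = cdom C b; e = dl P p (Delta P C b s); e1 = dl P (th P q p) (Delta P C b s);
         f = th P s (Theta P C b p); f1 = dl P (Theta P C b p) s
     in ccomp C (ccomp C (\<epsilon> (chn [e, e1])) (rrest C (lrest C (th P q p) b) f1)) (\<epsilon> (chn [f1, f])))"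

definition rho :: "'m projalg \<Rightarrow> ('m, 'z) bicat_scheme \<Rightarrow> ('m list \<Rightarrow> 'm) \<Rightarrow> 'm \<Rightarrow> 'm \<Rightarrow> 'm \<Rightarrow> 'm" where
  "rho P C \<epsilon> p b s =
    (let r = ccod C b; e = dl P p (Delta P C b s); e2 = th P (Delta P C b s) p;
         f = th P s (Theta P C b p); f2 = th P (dl P r s) (Theta P C b p)
     in ccomp C (ccomp C (\<epsilon> (chn [e, e2])) (lrest C e2 (rrest C b (dl P r s)))) (\<epsilon> (chn [f2, f])))"

definition chained_projection_category ::
  "'m projalg \<Rightarrow> ('m, 'z) bicat_scheme \<Rightarrow> ('m list \<Rightarrow> 'm) \<Rightarrow> bool" where
  "chained_projection_category P C \<epsilon> \<longleftrightarrow> projection_category P C \<and> evaluation_map P C \<epsilon> \<and>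
     (\<forall>b\<in>mor C. \<forall>p\<in>pcar P. \<forall>s\<in>pcar P. lam P C \<epsilon> p b s = rho P C \<epsilon> p b s)"

definition chained_projection_functor ::
  "'m projalg \<Rightarrow> ('m, 'z) bicat_scheme \<Rightarrow> ('m list \<Rightarrow> 'm) \<Rightarrow>
   'n projalg \<Rightarrow> ('n, 'y) bicat_scheme \<Rightarrow> ('n list \<Rightarrow> 'n) \<Rightarrow> ('m \<Rightarrow> 'n) \<Rightarrow> bool" where
  "chained_projection_functor P C \<epsilon> P' C' \<epsilon>' \<phi> \<longleftrightarrow>
     biordered_functor C C' \<phi> \<and> projalg_morphism P P' \<phi> \<and>
     (\<forall>ps. is_path P ps \<longrightarrow> \<phi> (\<epsilon> (chn ps)) = \<epsilon>' (chn (map \<phi> ps)))"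

definition drc_proj :: "'a set \<Rightarrow> ('a \<Rightarrow> 'a \<Rightarrow> 'a) \<Rightarrow> ('a \<Rightarrow> 'a) \<Rightarrow> ('a \<Rightarrow> 'a) \<Rightarrow> 'a projalg" where
  "drc_proj S m D R = \<lparr> pcar = {D a | a. a \<in> S}, th = (\<lambda>p q. R (m q p)), dl = (\<lambda>p q. D (m p q)) \<rparr>"

definition proj_le :: "('a \<Rightarrow> 'a \<Rightarrow> 'a) \<Rightarrow> 'a \<Rightarrow> 'a \<Rightarrow> bool" where
  "proj_le m p q \<longleftrightarrow> p = m p q \<and> p = m q p"

definition drc_cat :: "'a set \<Rightarrow> ('a \<Rightarrow> 'a \<Rightarrow> 'a) \<Rightarrow> ('a \<Rightarrow> 'a) \<Rightarrow> ('a \<Rightarrow> 'a) \<Rightarrow> 'a bicat" where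
  "drc_cat S m D R =
    \<lparr> mor = S, cdom = D, ccod = R, ccomp = m,
      lle = (\<lambda>a b. a \<in> S \<and> b \<in> S \<and> proj_le m (D a) (D b) \<and> a = m (D a) b),
      rle = (\<lambda>a b. a \<in> S \<and> b \<in> S \<and> proj_le m (R a) (R b) \<and> a = m b (R a)) \<rparr>"

definition drc_eps :: "('a \<Rightarrow> 'a \<Rightarrow> 'a) \<Rightarrow> 'a list \<Rightarrow> 'a" where
  "drc_eps m ps = foldl m (hd ps) (tl ps)"

end

theory Submission
  imports Defs
begin

fun pr :: "('a \<Rightarrow> 'a \<Rightarrow> 'a) \<Rightarrow> 'a list \<Rightarrow> 'a" where
  "pr m [] = undefined"
| "pr m [x] = x"
| "pr m (x # y # xs) = m x (pr m (y # xs))"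

locale drcl =
  fixes S :: "'a set" and m :: "'a \<Rightarrow> 'a \<Rightarrow> 'a" (infixl "\<cdot>" 70) and D R :: "'a \<Rightarrow> 'a"
  assumes drc: "drc S m D R"
begin

lemma cl[simp]: "a \<in> S \<Longrightarrow> b \<in> S \<Longrightarrow> a \<cdot> b \<in> S" "a \<in> S \<Longrightarrow> D a \<in> S" "a \<in> S \<Longrightarrow> R a \<in> S"
  using drc unfolding drc_def by auto

lemma assoc[simp]: "a \<in> S \<Longrightarrow> b \<in> S \<Longrightarrow> c \<in> S \<Longrightarrow> (a \<cdot> b) \<cdot> c = a \<cdot> (b \<cdot> c)"
  using drc unfolding drc_def by auto

lemma Dl[simp]: "a \<in> S \<Longrightarrow> D a \<cdot> a = a" and Rr[simp]: "a \<in> S \<Longrightarrow> a \<cdot> R a = a"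
  using drc unfolding drc_def by auto

lemma Dl2[simp]: "a \<in> S \<Longrightarrow> x \<in> S \<Longrightarrow> D a \<cdot> (a \<cdot> x) = a \<cdot> x"
  by (metis Dl assoc cl)

lemma Rr2[simp]: "a \<in> S \<Longrightarrow> x \<in> S \<Longrightarrow> a \<cdot> (R a \<cdot> x) = a \<cdot> x"
  by (metis Rr assoc cl)

lemma Dabs[simp]: "a \<in> S \<Longrightarrow> b \<in> S \<Longrightarrow> D (a \<cdot> D b) = D (a \<cdot> b)"
  and Rabs[simp]: "a \<in> S \<Longrightarrow> b \<in> S \<Longrightarrow> R (R a \<cdot> b) = R (a \<cdot> b)"
  using drc unfolding drc_def by auto

lemma Dmid: "a \<in> S \<Longrightarrow> b \<in> S \<Longrightarrow> D (a \<cdot> b) = D a \<cdot> D (a \<cdot> b) \<cdot> D a"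
  and Rmid: "a \<in> S \<Longrightarrow> b \<in> S \<Longrightarrow> R (a \<cdot> b) = R b \<cdot> R (a \<cdot> b) \<cdot> R b"
  using drc unfolding drc_def by auto

lemma RD[simp]: "a \<in> S \<Longrightarrow> R (D a) = D a" and DR[simp]: "a \<in> S \<Longrightarrow> D (R a) = R a"
  using drc unfolding drc_def by auto

lemma DD[simp]: "a \<in> S \<Longrightarrow> D (D a) = D a"
  by (metis DR RD cl(2))
lemma RR[simp]: "a \<in> S \<Longrightarrow> R (R a) = R a"
  by (metis DR RD cl(3))

definition PP where "PP = {D a | a. a \<in> S}"

lemma P_iff: "x \<in> PP \<longleftrightarrow> x \<in> S \<and> D x = x"
proof
  assume "x \<in> PP" then obtain a where "a \<in> S" "x = D a" unfolding PP_def by blast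
  then show "x \<in> S \<and> D x = x" by simp
next
  assume "x \<in> S \<and> D x = x" then show "x \<in> PP" unfolding PP_def by force
qed

lemma PS[simp]: "p \<in> PP \<Longrightarrow> p \<in> S" and PD[simp]: "p \<in> PP \<Longrightarrow> D p = p"
  using P_iff by blast+
lemma PR[simp]: "p \<in> PP \<Longrightarrow> R p = p"
proof -
  assume h: "p \<in> PP"
  show "R p = p" using RD[OF PS[OF h]] unfolding PD[OF h] .
qed
lemma DP[simp]: "a \<in> S \<Longrightarrow> D a \<in> PP" and RP[simp]: "a \<in> S \<Longrightarrow> R a \<in> PP"
  unfolding P_iff using cl DD RR DR by auto
lemma Pid[simp]: "p \<in> PP \<Longrightarrow> p \<cdot> p = p"
proof -
  assume h: "p \<in> PP"
  show "p \<cdot> p = p" using Dl[OF PS[OF h]] unfolding PD[OF h] .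
qed
lemma Pid2[simp]: "p \<in> PP \<Longrightarrow> x \<in> S \<Longrightarrow> p \<cdot> (p \<cdot> x) = p \<cdot> x"
proof -
  assume h: "p \<in> PP" "x \<in> S"
  show "p \<cdot> (p \<cdot> x) = p \<cdot> x" using assoc[OF PS[OF h(1)] PS[OF h(1)] h(2)] unfolding Pid[OF h(1)] by simp
qed

lemma Rap_le1: "a \<in> S \<Longrightarrow> p \<in> PP \<Longrightarrow> R (a \<cdot> p) \<cdot> p = R (a \<cdot> p)"
proof -
  assume a: "a \<in> S" "p \<in> PP"
  have "R (a \<cdot> p) \<cdot> p = (p \<cdot> R (a \<cdot> p) \<cdot> p) \<cdot> p" using Rmid[of a p] a by simp
  also have "\<dots> = p \<cdot> R (a \<cdot> p) \<cdot> p" using a by simp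
  also have "\<dots> = R (a \<cdot> p)" using Rmid[of a p] a by simp
  finally show ?thesis .
qed
lemma Rap_le2: "a \<in> S \<Longrightarrow> p \<in> PP \<Longrightarrow> p \<cdot> R (a \<cdot> p) = R (a \<cdot> p)"
proof -
  assume a: "a \<in> S" "p \<in> PP"
  have "p \<cdot> R (a \<cdot> p) = p \<cdot> (p \<cdot> R (a \<cdot> p) \<cdot> p)" using Rmid[of a p] a by simp
  also have "\<dots> = p \<cdot> R (a \<cdot> p) \<cdot> p" using a by simp
  also have "\<dots> = R (a \<cdot> p)" using Rmid[of a p] a by simp
  finally show ?thesis .
qed
lemma Dpa_le1: "a \<in> S \<Longrightarrow> p \<in> PP \<Longrightarrow> D (p \<cdot> a) \<cdot> p = D (p \<cdot> a)"
proof -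
  assume a: "a \<in> S" "p \<in> PP"
  have "D (p \<cdot> a) \<cdot> p = (p \<cdot> D (p \<cdot> a) \<cdot> p) \<cdot> p" using Dmid[of p a] a by simp
  also have "\<dots> = p \<cdot> D (p \<cdot> a) \<cdot> p" using a by simp
  also have "\<dots> = D (p \<cdot> a)" using Dmid[of p a] a by simp
  finally show ?thesis .
qed
lemma Dpa_le2: "a \<in> S \<Longrightarrow> p \<in> PP \<Longrightarrow> p \<cdot> D (p \<cdot> a) = D (p \<cdot> a)"
proof -
  assume a: "a \<in> S" "p \<in> PP"
  have "p \<cdot> D (p \<cdot> a) = p \<cdot> (p \<cdot> D (p \<cdot> a) \<cdot> p)" using Dmid[of p a] a by simp
  also have "\<dots> = p \<cdot> D (p \<cdot> a) \<cdot> p" using a by simp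
  also have "\<dots> = D (p \<cdot> a)" using Dmid[of p a] a by simp
  finally show ?thesis .
qed

lemma aRap: "a \<in> S \<Longrightarrow> p \<in> PP \<Longrightarrow> a \<cdot> R (a \<cdot> p) = a \<cdot> p"
proof -
  assume a: "a \<in> S" "p \<in> PP"
  have "a \<cdot> R (a \<cdot> p) = a \<cdot> (p \<cdot> R (a \<cdot> p))" using Rap_le2 a by simp
  also have "\<dots> = (a \<cdot> p) \<cdot> R (a \<cdot> p)" using a by (intro assoc[symmetric]) auto
  also have "\<dots> = a \<cdot> p" using a by (simp del: assoc)
  finally show ?thesis .
qed

lemma Dpaa: "a \<in> S \<Longrightarrow> p \<in> PP \<Longrightarrow> D (p \<cdot> a) \<cdot> a = p \<cdot> a"
proof -
  assume a: "a \<in> S" "p \<in> PP"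
  have "D (p \<cdot> a) \<cdot> a = (D (p \<cdot> a) \<cdot> p) \<cdot> a" using Dpa_le1 a by simp
  also have "\<dots> = D (p \<cdot> a) \<cdot> (p \<cdot> a)" using a by simp
  also have "\<dots> = p \<cdot> a" using a by (simp del: assoc)
  finally show ?thesis .
qed

lemma DRprod: "p \<in> PP \<Longrightarrow> q \<in> PP \<Longrightarrow> D (p \<cdot> q) \<cdot> R (p \<cdot> q) = p \<cdot> q"
proof -
  assume a: "p \<in> PP" "q \<in> PP"
  have "D (p \<cdot> q) \<cdot> R (p \<cdot> q) = (D (p \<cdot> q) \<cdot> p) \<cdot> R (p \<cdot> q)" using Dpa_le1 a by simp
  also have "\<dots> = D (p \<cdot> q) \<cdot> (p \<cdot> R (p \<cdot> q))" using a by simp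
  also have "\<dots> = p \<cdot> q" using aRap[of p q] a by (simp del: assoc)
  finally show ?thesis .
qed

lemma le_iff:
  assumes a: "p \<in> PP" "q \<in> PP"
  shows "(p = R (p \<cdot> q)) = (p = p \<cdot> q \<and> p = q \<cdot> p)"
proof
  assume h: "p = R (p \<cdot> q)"
  have "R (p \<cdot> q) \<cdot> q = R (p \<cdot> q)" using Rap_le1[of p q] a by simp
  then have "p \<cdot> q = p" by (simp only: h[symmetric])
  moreover have "q \<cdot> R (p \<cdot> q) = R (p \<cdot> q)" using Rap_le2[of p q] a by simp
  then have "q \<cdot> p = p" by (simp only: h[symmetric])
  ultimately show "p = p \<cdot> q \<and> p = q \<cdot> p" by simp
next
  assume "p = p \<cdot> q \<and> p = q \<cdot> p"
  then have "R (p \<cdot> q) = R p" by (simp only:)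
  then show "p = R (p \<cdot> q)" using a by simp
qed

end

context drcl begin

abbreviation "PA \<equiv> drc_proj S m D R"
abbreviation "CC \<equiv> drc_cat S m D R"

lemma PA_simps[simp]: "pcar PA = PP" "th PA p q = R (q \<cdot> p)" "dl PA p q = D (p \<cdot> q)"
  by (simp_all only: drc_proj_def PP_def projalg.simps)

lemma CC_simps[simp]: "mor CC = S" "cdom CC = D" "ccod CC = R" "ccomp CC = m"
  "lle CC a b = (a \<in> S \<and> b \<in> S \<and> proj_le m (D a) (D b) \<and> a = D a \<cdot> b)"
  "rle CC a b = (a \<in> S \<and> b \<in> S \<and> proj_le m (R a) (R b) \<and> a = b \<cdot> R a)"
  by (simp_all only: drc_cat_def bicat.simps)

lemma obj_CC[simp]: "obj CC = PP"
  unfolding obj_def using P_iff by (auto simp del: PS PD)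

lemma pa_le_iff: "p \<in> PP \<Longrightarrow> q \<in> PP \<Longrightarrow> pa_le PA p q \<longleftrightarrow> proj_le m p q"
  using le_iff[of p q] by (simp add: pa_le_def proj_le_def)

lemma pa_F_iff: "pa_F PA p q \<longleftrightarrow> p = D (p \<cdot> q) \<and> q = R (p \<cdot> q)"
  by (simp add: pa_F_def)

lemma pr_in[simp]: "xs \<noteq> [] \<Longrightarrow> set xs \<subseteq> S \<Longrightarrow> pr m xs \<in> S"
proof (induction xs)
  case (Cons x xs) then show ?case by (cases xs) auto
qed simp

lemma PPS: "set xs \<subseteq> PP \<Longrightarrow> set xs \<subseteq> S"
  using PS by blast

lemma pr_Cons: "xs \<noteq> [] \<Longrightarrow> set (x # xs) \<subseteq> S \<Longrightarrow> pr m (x # xs) = x \<cdot> pr m xs"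
  by (cases xs) auto

lemma pr_append: "xs \<noteq> [] \<Longrightarrow> ys \<noteq> [] \<Longrightarrow> set xs \<subseteq> S \<Longrightarrow> set ys \<subseteq> S \<Longrightarrow>
   pr m (xs @ ys) = pr m xs \<cdot> pr m ys"
proof (induction xs)
  case Nil then show ?case by simp
next
  case (Cons x xs)
  show ?case
  proof (cases "xs = []")
    case True then show ?thesis using Cons by (simp add: pr_Cons)
  next
    case False then show ?thesis using Cons by (simp add: pr_Cons)
  qed
qed

lemma eps_pr: "xs \<noteq> [] \<Longrightarrow> set xs \<subseteq> S \<Longrightarrow> drc_eps m xs = pr m xs"
proof -
  have "set (x # ys) \<subseteq> S \<Longrightarrow> foldl m x ys = pr m (x # ys)" for x ys
  proof (induction ys arbitrary: x)
    case Nil then show ?case by simp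
  next
    case (Cons y ys)
    have "foldl m x (y # ys) = pr m ((x \<cdot> y) # ys)" using Cons by simp
    also have "\<dots> = x \<cdot> pr m (y # ys)" using Cons.prems by (cases ys) auto
    finally show ?case using Cons.prems by (simp add: pr_Cons)
  qed
  then show "xs \<noteq> [] \<Longrightarrow> set xs \<subseteq> S \<Longrightarrow> drc_eps m xs = pr m xs"
    by (cases xs) (auto simp: drc_eps_def)
qed

lemma pr_remdups: "xs \<noteq> [] \<Longrightarrow> set xs \<subseteq> PP \<Longrightarrow> pr m (remdups_adj xs) = pr m xs"
proof (induction xs rule: remdups_adj.induct)
  case (3 x y xs)
  show ?case
  proof (cases "x = y")
    case True
    have x: "x \<in> PP" using 3 by auto
    have xs: "set xs \<subseteq> S" using "3.prems"(2) PS by auto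
    have e: "pr m (x # xs) = pr m (x # x # xs)" 
    proof (cases xs)
      case (Cons z zs)
      then have "pr m xs \<in> S" using xs by simp
      then show ?thesis using x Cons by simp
    qed (use x in simp)
    have "pr m (remdups_adj (x # y # xs)) = pr m (x # xs)" using 3 True by simp
    also have "\<dots> = pr m (x # y # xs)" using True e by simp
    finally show ?thesis .
  next
    case False
    then have "pr m (remdups_adj (x # y # xs)) = pr m (x # remdups_adj (y # xs))" by simp
    also have "\<dots> = x \<cdot> pr m (remdups_adj (y # xs))" using 3 
      by (intro pr_Cons) (auto simp: subset_iff)
    also have "\<dots> = x \<cdot> pr m (y # xs)" using 3 False by simp
    finally show ?thesis by simp
  qed
qed auto

end

context drcl begin

lemma is_path_iff: "is_path PA xs \<longleftrightarrow> xs \<noteq> [] \<and> set xs \<subseteq> PP \<and> successively (pa_F PA) xs"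
  by (simp add: is_path_def)

lemma path_Cons2: "is_path PA (x # y # ys) \<longleftrightarrow> x \<in> PP \<and> pa_F PA x y \<and> is_path PA (y # ys)"
  by (auto simp: is_path_def)

lemma path_D:
  assumes "is_path PA xs" shows "D (pr m xs) = hd xs"
  using assms
proof (induction xs)
  case Nil thus ?case by (simp add: is_path_def)
next
  case (Cons x xs)
  show ?case
  proof (cases "xs = []")
    case True then show ?thesis using Cons.prems by (simp add: is_path_def)
  next
    case False
    then obtain y ys where xs: "xs = y # ys" by (cases xs) auto
    have p: "is_path PA (y#ys)" and F: "pa_F PA x y" and x: "x \<in> PP"
      using Cons.prems xs path_Cons2 by auto
    have yys: "set (y # ys) \<subseteq> S" using p PS by (auto simp: is_path_def)
    have IH: "D (pr m (y#ys)) = y" using Cons.IH p xs by simp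
    have "D (pr m (x#y#ys)) = D (x \<cdot> pr m (y#ys))" by simp
    also have "\<dots> = D (x \<cdot> D (pr m (y#ys)))" using x yys by simp
    also have "\<dots> = D (x \<cdot> y)" using IH by simp
    also have "\<dots> = x" using F pa_F_iff by metis
    finally show ?thesis using xs by simp
  qed
qed

lemma path_R_gen:
  assumes "is_path PA xs" "a \<in> S" "R (R a \<cdot> hd xs) = hd xs"
  shows "R (a \<cdot> pr m xs) = last xs"
  using assms
proof (induction xs arbitrary: a)
  case Nil thus ?case by (simp add: is_path_def)
next
  case (Cons x xs)
  have x: "x \<in> PP" using Cons.prems by (simp add: is_path_def)
  show ?case
  proof (cases "xs = []")
    case True then show ?thesis using Cons.prems x by simp
  next
    case False
    then obtain y ys where xs: "xs = y # ys" by (cases xs) auto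
    have p: "is_path PA (y#ys)" and F: "pa_F PA x y"
      using Cons.prems xs path_Cons2 by auto
    have yys: "set (y # ys) \<subseteq> S" using p PS by (auto simp: is_path_def)
    have y: "y \<in> PP" using p by (simp add: is_path_def)
    have Rax: "R (a \<cdot> x) = x" using Cons.prems(2,3) x by simp
    have Fy: "R (x \<cdot> y) = y" using F pa_F_iff by metis
    have "R (R (a \<cdot> x) \<cdot> y) = y" using Rax Fy by simp
    then have IH: "R ((a \<cdot> x) \<cdot> pr m (y#ys)) = last (y#ys)"
      using Cons.IH[of "a \<cdot> x"] p xs Cons.prems(2) x by simp
    have "R (a \<cdot> pr m (x#y#ys)) = R ((a \<cdot> x) \<cdot> pr m (y#ys))"
      using Cons.prems(2) x yys by simp
    also have "\<dots> = last (y#ys)" using IH .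
    finally show ?thesis using xs by simp
  qed
qed

lemma path_R: "is_path PA xs \<Longrightarrow> R (pr m xs) = last xs"
proof -
  assume p: "is_path PA xs"
  have h: "hd xs \<in> PP" and s: "set xs \<subseteq> S" and ne: "xs \<noteq> []" using p PS by (auto simp: is_path_def)
  have "pr m xs = D (pr m xs) \<cdot> pr m xs" using s ne by simp
  then have e: "pr m xs = hd xs \<cdot> pr m xs" using path_D[OF p] by simp
  have "R (hd xs \<cdot> pr m xs) = last xs" using path_R_gen[OF p, of "hd xs"] h by simp
  then show ?thesis using e by simp
qed

lemma lpath_ne: "lpath PA q ps = [] \<longleftrightarrow> ps = []"
  by (cases ps) auto

lemma lpath_set: "q \<in> S \<Longrightarrow> set ps \<subseteq> PP \<Longrightarrow> set (lpath PA q ps) \<subseteq> PP"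
  by (induction ps arbitrary: q) auto

lemma lpathD_ne: "lpathD PA q ps = [] \<longleftrightarrow> ps = []"
  by (cases ps) auto

lemma lpathD_set: "q \<in> S \<Longrightarrow> set ps \<subseteq> PP \<Longrightarrow> set (lpathD PA q ps) \<subseteq> PP"
  by (induction ps arbitrary: q) auto

lemma lpath_pr:
  assumes "a \<in> S" "qs \<noteq> []" "set qs \<subseteq> PP"
  shows "a \<cdot> pr m (lpath PA (R a) qs) = a \<cdot> pr m qs"
  using assms
proof (induction qs arbitrary: a)
  case Nil thus ?case by simp
next
  case (Cons p ps)
  have p: "p \<in> PP" and a: "a \<in> S" and ps: "set ps \<subseteq> PP" using Cons.prems by auto
  have L: "lpath PA (R a) (p # ps) = R (a \<cdot> p) # lpath PA (R (a \<cdot> p)) ps" using a p by simp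
  show ?case
  proof (cases "ps = []")
    case True then show ?thesis using L aRap[OF a p] by simp
  next
    case False
    have ne: "lpath PA (R (a \<cdot> p)) ps \<noteq> []" using False lpath_ne by auto
    have ss: "set (lpath PA (R (a \<cdot> p)) ps) \<subseteq> S" using lpath_set[of "R (a \<cdot> p)" ps] ps a p PS by auto
    have psS: "set ps \<subseteq> S" using ps PS by auto
    have "a \<cdot> pr m (lpath PA (R a) (p # ps)) = a \<cdot> (R (a \<cdot> p) \<cdot> pr m (lpath PA (R (a \<cdot> p)) ps))"
      using L ne by (simp add: pr_Cons ss a p) 
    also have "\<dots> = (a \<cdot> R (a \<cdot> p)) \<cdot> pr m (lpath PA (R (a \<cdot> p)) ps)" using a p ss ne by simp
    also have "\<dots> = (a \<cdot> p) \<cdot> pr m (lpath PA (R (a \<cdot> p)) ps)" using aRap[OF a p] by simp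
    also have "\<dots> = (a \<cdot> p) \<cdot> pr m ps" using Cons.IH[of "a \<cdot> p"] a p False ps by simp
    also have "\<dots> = a \<cdot> pr m (p # ps)" using a p psS False by (simp add: pr_Cons)
    finally show ?thesis .
  qed
qed

lemma lpathD_pr:
  assumes "a \<in> S" "xs \<noteq> []" "set xs \<subseteq> PP"
  shows "pr m (rev (lpathD PA (D a) xs)) \<cdot> a = pr m (rev xs) \<cdot> a"
  using assms
proof (induction xs arbitrary: a)
  case Nil thus ?case by simp
next
  case (Cons p ps)
  have p: "p \<in> PP" and a: "a \<in> S" and ps: "set ps \<subseteq> PP" using Cons.prems by auto
  have L: "lpathD PA (D a) (p # ps) = D (p \<cdot> a) # lpathD PA (D (p \<cdot> a)) ps" using a p by simp
  show ?case
  proof (cases "ps = []")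
    case True then show ?thesis using L Dpaa[OF a p] by simp
  next
    case False
    have ne: "rev (lpathD PA (D (p \<cdot> a)) ps) \<noteq> []" using False lpathD_ne by auto
    have ss: "set (rev (lpathD PA (D (p \<cdot> a)) ps)) \<subseteq> S" using lpathD_set[of "D (p \<cdot> a)" ps] ps a p PS by auto
    have psS: "set (rev ps) \<subseteq> S" "rev ps \<noteq> []" using ps PS False by auto
    have "pr m (rev (lpathD PA (D a) (p # ps))) \<cdot> a = (pr m (rev (lpathD PA (D (p \<cdot> a)) ps)) \<cdot> D (p \<cdot> a)) \<cdot> a"
      using L ne ss a p by (simp add: pr_append)
    also have "\<dots> = pr m (rev (lpathD PA (D (p \<cdot> a)) ps)) \<cdot> (D (p \<cdot> a) \<cdot> a)" using a p ss ne by simp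
    also have "\<dots> = pr m (rev (lpathD PA (D (p \<cdot> a)) ps)) \<cdot> (p \<cdot> a)" using Dpaa[OF a p] by simp
    also have "\<dots> = pr m (rev ps) \<cdot> (p \<cdot> a)" using Cons.IH[of "p \<cdot> a"] a p False ps by simp
    also have "\<dots> = pr m (rev (p # ps)) \<cdot> a" using a p psS by (simp add: pr_append)
    finally show ?thesis .
  qed
qed

end

context drcl begin

lemma proj_le': "proj_le m p q \<longleftrightarrow> p \<cdot> q = p \<and> q \<cdot> p = p"
  by (metis proj_le_def)

lemma lle_CC: "lle CC a b \<longleftrightarrow> a \<in> S \<and> b \<in> S \<and> D a \<cdot> D b = D a \<and> D b \<cdot> D a = D a \<and> D a \<cdot> b = a"
  by (metis CC_simps(5) proj_le_def)
lemma rle_CC: "rle CC a b \<longleftrightarrow> a \<in> S \<and> b \<in> S \<and> R a \<cdot> R b = R a \<and> R b \<cdot> R a = R a \<and> b \<cdot> R a = a"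
  by (metis CC_simps(6) proj_le_def)

declare CC_simps(5,6)[simp del]

lemma Rle: "a \<in> S \<Longrightarrow> b \<in> S \<Longrightarrow> R (a \<cdot> b) \<cdot> R b = R (a \<cdot> b)"
proof -
  assume a: "a \<in> S" "b \<in> S"
  have "R (a \<cdot> b) \<cdot> R b = (R b \<cdot> R (a \<cdot> b) \<cdot> R b) \<cdot> R b" using Rmid[of a b] a by simp
  also have "\<dots> = R b \<cdot> R (a \<cdot> b) \<cdot> R b" using a by simp
  also have "\<dots> = R (a \<cdot> b)" using Rmid[of a b] a by simp
  finally show ?thesis .
qed
lemma Rle2: "a \<in> S \<Longrightarrow> b \<in> S \<Longrightarrow> R b \<cdot> R (a \<cdot> b) = R (a \<cdot> b)"
proof -
  assume a: "a \<in> S" "b \<in> S"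
  have "R b \<cdot> R (a \<cdot> b) = R b \<cdot> (R b \<cdot> R (a \<cdot> b) \<cdot> R b)" using Rmid[of a b] a by simp
  also have "\<dots> = R b \<cdot> R (a \<cdot> b) \<cdot> R b" using a by simp
  also have "\<dots> = R (a \<cdot> b)" using Rmid[of a b] a by simp
  finally show ?thesis .
qed
lemma Dle: "a \<in> S \<Longrightarrow> b \<in> S \<Longrightarrow> D (a \<cdot> b) \<cdot> D a = D (a \<cdot> b)"
proof -
  assume a: "a \<in> S" "b \<in> S"
  have "D (a \<cdot> b) \<cdot> D a = (D a \<cdot> D (a \<cdot> b) \<cdot> D a) \<cdot> D a" using Dmid[of a b] a by simp
  also have "\<dots> = D a \<cdot> D (a \<cdot> b) \<cdot> D a" using a by simp
  also have "\<dots> = D (a \<cdot> b)" using Dmid[of a b] a by simp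
  finally show ?thesis .
qed
lemma Dle2: "a \<in> S \<Longrightarrow> b \<in> S \<Longrightarrow> D a \<cdot> D (a \<cdot> b) = D (a \<cdot> b)"
proof -
  assume a: "a \<in> S" "b \<in> S"
  have "D a \<cdot> D (a \<cdot> b) = D a \<cdot> (D a \<cdot> D (a \<cdot> b) \<cdot> D a)" using Dmid[of a b] a by simp
  also have "\<dots> = D a \<cdot> D (a \<cdot> b) \<cdot> D a" using a by simp
  also have "\<dots> = D (a \<cdot> b)" using Dmid[of a b] a by simp
  finally show ?thesis .
qed

lemma comp_D: "a \<in> S \<Longrightarrow> b \<in> S \<Longrightarrow> R a = D b \<Longrightarrow> D (a \<cdot> b) = D a"
proof -
  assume h: "a \<in> S" "b \<in> S" "R a = D b"
  have "D (a \<cdot> b) = D (a \<cdot> D b)" using h(1,2) by simp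
  also have "\<dots> = D (a \<cdot> R a)" using h by simp
  also have "\<dots> = D a" using h(1,2) by simp
  finally show ?thesis .
qed

lemma comp_R: "a \<in> S \<Longrightarrow> b \<in> S \<Longrightarrow> R a = D b \<Longrightarrow> R (a \<cdot> b) = R b"
proof -
  assume h: "a \<in> S" "b \<in> S" "R a = D b"
  have "R (a \<cdot> b) = R (R a \<cdot> b)" using h(1,2) by simp
  also have "\<dots> = R (D b \<cdot> b)" using h by simp
  also have "\<dots> = R b" using h(1,2) by simp
  finally show ?thesis .
qed

lemma category_CC: "category CC"
  unfolding category_def CC_simps
  using comp_D comp_R by auto

lemma lrest_eq: "a \<in> S \<Longrightarrow> p \<in> PP \<Longrightarrow> p \<cdot> D a = p \<Longrightarrow> D a \<cdot> p = p \<Longrightarrow> lrest CC p a = p \<cdot> a"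
proof -
  assume h: "a \<in> S" "p \<in> PP" "p \<cdot> D a = p" "D a \<cdot> p = p"
  have Dpa: "D (p \<cdot> a) = p"
  proof -
    have "D (p \<cdot> a) = D (p \<cdot> D a)" using h(1,2) by simp
    also have "\<dots> = p" using h by simp
    finally show ?thesis .
  qed
  show ?thesis unfolding lrest_def
  proof (rule the_equality)
    show "p \<cdot> a \<in> mor CC \<and> lle CC (p \<cdot> a) a \<and> cdom CC (p \<cdot> a) = p"
      using h Dpa by (simp add: lle_CC)
    fix u assume "u \<in> mor CC \<and> lle CC u a \<and> cdom CC u = p"
    then show "u = p \<cdot> a" unfolding lle_CC CC_simps by metis
  qed
qed

lemma rrest_eq: "a \<in> S \<Longrightarrow> q \<in> PP \<Longrightarrow> q \<cdot> R a = q \<Longrightarrow> R a \<cdot> q = q \<Longrightarrow> rrest CC a q = a \<cdot> q"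
proof -
  assume h: "a \<in> S" "q \<in> PP" "q \<cdot> R a = q" "R a \<cdot> q = q"
  have Raq: "R (a \<cdot> q) = q"
  proof -
    have "R (a \<cdot> q) = R (R a \<cdot> q)" using h(1,2) by simp
    also have "\<dots> = q" using h by simp
    finally show ?thesis .
  qed
  show ?thesis unfolding rrest_def
  proof (rule the_equality)
    show "a \<cdot> q \<in> mor CC \<and> rle CC (a \<cdot> q) a \<and> ccod CC (a \<cdot> q) = q"
      using h Raq by (simp add: rle_CC)
    fix u assume "u \<in> mor CC \<and> rle CC u a \<and> ccod CC u = q"
    then show "u = a \<cdot> q" unfolding rle_CC CC_simps by metis
  qed
qed

lemma Theta_eq: "a \<in> S \<Longrightarrow> x \<in> PP \<Longrightarrow> Theta PA CC a x = R (x \<cdot> a)"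
proof -
  assume h: "a \<in> S" "x \<in> PP"
  have "lrest CC (R (x \<cdot> D a)) a = R (x \<cdot> D a) \<cdot> a"
    using h Rap_le1[of x "D a"] Rap_le2[of x "D a"] by (intro lrest_eq) auto
  then show ?thesis using h by (simp add: Theta_def)
qed

lemma Delta_eq: "a \<in> S \<Longrightarrow> x \<in> PP \<Longrightarrow> Delta PA CC a x = D (a \<cdot> x)"
proof -
  assume h: "a \<in> S" "x \<in> PP"
  have "rrest CC a (D (R a \<cdot> x)) = a \<cdot> D (R a \<cdot> x)"
    using h Dpa_le1[of x "R a"] Dpa_le2[of x "R a"] by (intro rrest_eq) auto
  then show ?thesis using h by (simp add: Delta_def)
qed

end

context drcl begin

lemma lle_antisym: "lle CC a b \<Longrightarrow> lle CC b a \<Longrightarrow> a = b"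
  unfolding lle_CC by (metis Dl)

lemma lle_trans: assumes ab: "lle CC a b" and bc: "lle CC b c" shows "lle CC a c"
proof -
  from ab have a: "a \<in> S" "b \<in> S" and h1: "D a \<cdot> D b = D a" and h2: "D b \<cdot> D a = D a" and h3: "D a \<cdot> b = a"
    unfolding lle_CC by auto
  from bc have c: "c \<in> S" and k1: "D b \<cdot> D c = D b" and k2: "D c \<cdot> D b = D b" and k3: "D b \<cdot> c = b"
    unfolding lle_CC by auto
  have "D a \<cdot> D c = (D a \<cdot> D b) \<cdot> D c" by (simp only: h1)
  also have "\<dots> = D a \<cdot> (D b \<cdot> D c)" using a c by simp
  also have "\<dots> = D a" by (simp only: k1 h1)
  finally have 1: "D a \<cdot> D c = D a" .
  have "D c \<cdot> D a = D c \<cdot> (D b \<cdot> D a)" by (simp only: h2)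
  also have "\<dots> = (D c \<cdot> D b) \<cdot> D a" using a c by simp
  also have "\<dots> = D a" by (simp only: k2 h2)
  finally have 2: "D c \<cdot> D a = D a" .
  have "D a \<cdot> c = (D a \<cdot> D b) \<cdot> c" by (simp only: h1)
  also have "\<dots> = D a \<cdot> (D b \<cdot> c)" using a c by simp
  also have "\<dots> = a" by (simp only: k3 h3)
  finally have 3: "D a \<cdot> c = a" .
  show ?thesis unfolding lle_CC using 1 2 3 a c by simp
qed

lemma rle_antisym: "rle CC a b \<Longrightarrow> rle CC b a \<Longrightarrow> a = b"
  unfolding rle_CC by (metis Rr)

lemma rle_trans: assumes ab: "rle CC a b" and bc: "rle CC b c" shows "rle CC a c"
proof -
  from ab have a: "a \<in> S" "b \<in> S" and h1: "R a \<cdot> R b = R a" and h2: "R b \<cdot> R a = R a" and h3: "b \<cdot> R a = a"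
    unfolding rle_CC by auto
  from bc have c: "c \<in> S" and k1: "R b \<cdot> R c = R b" and k2: "R c \<cdot> R b = R b" and k3: "c \<cdot> R b = b"
    unfolding rle_CC by auto
  have "R a \<cdot> R c = (R a \<cdot> R b) \<cdot> R c" by (simp only: h1)
  also have "\<dots> = R a \<cdot> (R b \<cdot> R c)" using a c by simp
  also have "\<dots> = R a" by (simp only: k1 h1)
  finally have 1: "R a \<cdot> R c = R a" .
  have "R c \<cdot> R a = R c \<cdot> (R b \<cdot> R a)" by (simp only: h2)
  also have "\<dots> = (R c \<cdot> R b) \<cdot> R a" using a c by simp
  also have "\<dots> = R a" by (simp only: k2 h2)
  finally have 2: "R c \<cdot> R a = R a" .
  have "c \<cdot> R a = c \<cdot> (R b \<cdot> R a)" by (simp only: h2)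
  also have "\<dots> = (c \<cdot> R b) \<cdot> R a" using a c by simp
  also have "\<dots> = a" by (simp only: k3 h3)
  finally have 3: "c \<cdot> R a = a" .
  show ?thesis unfolding rle_CC using 1 2 3 a c by simp
qed

lemma po_lle: "partial_order_on' S (lle CC)"
proof -
  have 1: "\<forall>a b. lle CC a b \<longrightarrow> a \<in> S \<and> b \<in> S" by (simp add: lle_CC)
  have 2: "\<forall>a\<in>S. lle CC a a" by (simp add: lle_CC)
  show ?thesis unfolding partial_order_on'_def using 1 2 lle_antisym lle_trans by blast
qed

lemma po_rle: "partial_order_on' S (rle CC)"
proof -
  have 1: "\<forall>a b. rle CC a b \<longrightarrow> a \<in> S \<and> b \<in> S" by (simp add: rle_CC)
  have 2: "\<forall>a\<in>S. rle CC a a" by (simp add: rle_CC)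
  show ?thesis unfolding partial_order_on'_def using 1 2 rle_antisym rle_trans by blast
qed

lemma lle_DR: assumes ab: "lle CC a b" shows "lle CC (D a) (D b) \<and> lle CC (R a) (R b)"
proof -
  from ab have a: "a \<in> S" "b \<in> S" and h1: "D a \<cdot> D b = D a" and h2: "D b \<cdot> D a = D a" and h3: "D a \<cdot> b = a"
    unfolding lle_CC by auto
  have Ra: "R a = R (D a \<cdot> b)" by (simp only: h3)
  have 1: "R a \<cdot> R b = R a" using Rle[of "D a" b] a Ra by simp
  have 2: "R b \<cdot> R a = R a" using Rle2[of "D a" b] a Ra by simp
  show ?thesis unfolding lle_CC using a h1 h2 1 2 by simp
qed

lemma rle_DR: assumes ab: "rle CC a b" shows "rle CC (D a) (D b) \<and> rle CC (R a) (R b)"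
proof -
  from ab have a: "a \<in> S" "b \<in> S" and h1: "R a \<cdot> R b = R a" and h2: "R b \<cdot> R a = R a" and h3: "b \<cdot> R a = a"
    unfolding rle_CC by auto
  have Da: "D a = D (b \<cdot> R a)" by (simp only: h3)
  have 1: "D a \<cdot> D b = D a" using Dle[of b "R a"] a Da by simp
  have 2: "D b \<cdot> D a = D a" using Dle2[of b "R a"] a Da by simp
  show ?thesis unfolding rle_CC using a h1 h2 1 2 by simp
qed

lemma lle_comp: assumes ab: "lle CC a b" and cc: "lle CC c c'" and e1: "R a = D c" and e2: "R b = D c'"
  shows "lle CC (a \<cdot> c) (b \<cdot> c')"
proof -
  from ab have a: "a \<in> S" "b \<in> S" and h1: "D a \<cdot> D b = D a" and h2: "D b \<cdot> D a = D a" and h3: "D a \<cdot> b = a"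
    unfolding lle_CC by auto
  from cc have c: "c \<in> S" "c' \<in> S" and k3: "D c \<cdot> c' = c" unfolding lle_CC by auto
  have d1: "D (a \<cdot> c) = D a" using comp_D a c e1 by simp
  have d2: "D (b \<cdot> c') = D b" using comp_D a c e2 by simp
  have "a \<cdot> c = a \<cdot> (D c \<cdot> c')" by (simp only: k3)
  also have "\<dots> = a \<cdot> (R a \<cdot> c')" by (simp only: e1)
  also have "\<dots> = a \<cdot> c'" using a c by simp
  also have "\<dots> = (D a \<cdot> b) \<cdot> c'" by (simp only: h3)
  also have "\<dots> = D a \<cdot> (b \<cdot> c')" using a c by simp
  finally have 3: "D a \<cdot> (b \<cdot> c') = a \<cdot> c" by simp
  show ?thesis unfolding lle_CC d1 d2 using a c h1 h2 3 by simp
qed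

lemma rle_comp: assumes ab: "rle CC a b" and cc: "rle CC c c'" and e1: "R a = D c" and e2: "R b = D c'"
  shows "rle CC (a \<cdot> c) (b \<cdot> c')"
proof -
  from ab have a: "a \<in> S" "b \<in> S" and h3: "b \<cdot> R a = a" unfolding rle_CC by auto
  from cc have c: "c \<in> S" "c' \<in> S" and k1: "R c \<cdot> R c' = R c" and k2: "R c' \<cdot> R c = R c" and k3: "c' \<cdot> R c = c"
    unfolding rle_CC by auto
  have d1: "R (a \<cdot> c) = R c" using comp_R a c e1 by simp
  have d2: "R (b \<cdot> c') = R c'" using comp_R a c e2 by simp
  have "a \<cdot> c = (b \<cdot> R a) \<cdot> c" by (simp only: h3)
  also have "\<dots> = b \<cdot> (D c \<cdot> c)" using a c e1 by simp
  also have "\<dots> = b \<cdot> c" using a c by simp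
  also have "\<dots> = b \<cdot> (c' \<cdot> R c)" by (simp only: k3)
  also have "\<dots> = (b \<cdot> c') \<cdot> R c" using a c by simp
  finally have 3: "(b \<cdot> c') \<cdot> R c = a \<cdot> c" by simp
  show ?thesis unfolding rle_CC d1 d2 using a c k1 k2 3 by simp
qed

lemma lle_ex1: assumes a: "a \<in> S" "p \<in> PP" and l: "lle CC p (D a)"
  shows "\<exists>!u. u \<in> mor CC \<and> lle CC u a \<and> cdom CC u = p"
proof -
  from l a have h1: "p \<cdot> D a = p" and h2: "D a \<cdot> p = p" unfolding lle_CC by auto
  have Dpa: "D (p \<cdot> a) = p"
  proof -
    have "D (p \<cdot> a) = D (p \<cdot> D a)" using a by simp
    also have "\<dots> = p" using a h1 by simp
    finally show ?thesis .
  qed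
  show ?thesis
  proof (rule ex1I[of _ "p \<cdot> a"])
    show "p \<cdot> a \<in> mor CC \<and> lle CC (p \<cdot> a) a \<and> cdom CC (p \<cdot> a) = p"
      using a h1 h2 Dpa by (simp add: lle_CC)
    fix u assume "u \<in> mor CC \<and> lle CC u a \<and> cdom CC u = p"
    then show "u = p \<cdot> a" unfolding lle_CC CC_simps by metis
  qed
qed

lemma rle_ex1: assumes a: "a \<in> S" "q \<in> PP" and l: "rle CC q (R a)"
  shows "\<exists>!u. u \<in> mor CC \<and> rle CC u a \<and> ccod CC u = q"
proof -
  from l a have h1: "q \<cdot> R a = q" and h2: "R a \<cdot> q = q" unfolding rle_CC by auto
  have Raq: "R (a \<cdot> q) = q"
  proof -
    have "R (a \<cdot> q) = R (R a \<cdot> q)" using a by simp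
    also have "\<dots> = q" using a h2 by simp
    finally show ?thesis .
  qed
  show ?thesis
  proof (rule ex1I[of _ "a \<cdot> q"])
    show "a \<cdot> q \<in> mor CC \<and> rle CC (a \<cdot> q) a \<and> ccod CC (a \<cdot> q) = q"
      using a h1 h2 Raq by (simp add: rle_CC)
    fix u assume "u \<in> mor CC \<and> rle CC u a \<and> ccod CC u = q"
    then show "u = a \<cdot> q" unfolding rle_CC CC_simps by metis
  qed
qed

lemma left_ordered_CC: "left_ordered CC (lle CC)"
  unfolding left_ordered_def
  using category_CC po_lle lle_DR lle_comp lle_ex1 by auto

lemma right_ordered_CC: "right_ordered CC (rle CC)"
  unfolding right_ordered_def
  using category_CC po_rle rle_DR rle_comp rle_ex1 by auto

lemma biordered_CC: "biordered CC"
  unfolding biordered_def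
  using left_ordered_CC right_ordered_CC by (auto simp: lle_CC rle_CC)

end

context drcl begin

lemma aRap2: "a \<in> S \<Longrightarrow> p \<in> PP \<Longrightarrow> x \<in> S \<Longrightarrow> a \<cdot> (R (a \<cdot> p) \<cdot> x) = a \<cdot> (p \<cdot> x)"
proof -
  assume h: "a \<in> S" "p \<in> PP" "x \<in> S"
  have "a \<cdot> (R (a \<cdot> p) \<cdot> x) = (a \<cdot> R (a \<cdot> p)) \<cdot> x" using h by simp
  also have "\<dots> = (a \<cdot> p) \<cdot> x" using aRap h by simp
  also have "\<dots> = a \<cdot> (p \<cdot> x)" using h by simp
  finally show ?thesis .
qed

lemma Dpaa2: "a \<in> S \<Longrightarrow> p \<in> PP \<Longrightarrow> x \<in> S \<Longrightarrow> D (p \<cdot> a) \<cdot> (a \<cdot> x) = p \<cdot> (a \<cdot> x)"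
proof -
  assume h: "a \<in> S" "p \<in> PP" "x \<in> S"
  have "D (p \<cdot> a) \<cdot> (a \<cdot> x) = (D (p \<cdot> a) \<cdot> a) \<cdot> x" using h by simp
  also have "\<dots> = (p \<cdot> a) \<cdot> x" using Dpaa h by simp
  also have "\<dots> = p \<cdot> (a \<cdot> x)" using h by simp
  finally show ?thesis .
qed

lemma projalg_PA: "projection_algebra PA"
  unfolding projection_algebra_def PA_simps
proof (intro conjI ballI)
  fix p q x assume h: "p \<in> PP" "q \<in> PP" "x \<in> PP"
  show "R (R (x \<cdot> q) \<cdot> R (q \<cdot> p)) = R (R (x \<cdot> q) \<cdot> p)" using h aRap[of q p] by simp
  show "D (D (p \<cdot> q) \<cdot> D (q \<cdot> x)) = D (p \<cdot> D (q \<cdot> x))" using h Dpaa2[of q p x] by simp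
  show "R (R (x \<cdot> D (q \<cdot> p)) \<cdot> p) = R (R (x \<cdot> q) \<cdot> p)" using h Dpaa[of p q] by simp
  show "D (p \<cdot> D (R (p \<cdot> q) \<cdot> x)) = D (p \<cdot> D (q \<cdot> x))" using h aRap2[of p q x] by simp
next
  fix p q assume h: "p \<in> PP" "q \<in> PP"
  show "R (p \<cdot> R (q \<cdot> p)) = R (q \<cdot> p)" using h Rap_le2[of q p] by simp
  show "D (D (p \<cdot> q) \<cdot> p) = D (p \<cdot> q)" using h Dpa_le1[of q p] by simp
next
  fix p x assume h: "p \<in> PP" "x \<in> PP"
  show "D (p \<cdot> R (x \<cdot> p)) = R (x \<cdot> p)" using h Rap_le2[of x p] by simp
  show "R (D (p \<cdot> x) \<cdot> p) = D (p \<cdot> x)" using h Dpa_le1[of x p] by simp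
  show "R (x \<cdot> p) \<in> PP" using h by simp
  show "D (p \<cdot> x) \<in> PP" using h by simp
next
  fix p assume h: "p \<in> PP"
  show "R (p \<cdot> p) = p" using h by simp
  show "D (p \<cdot> p) = p" using h by simp
qed

lemma pa_le_CC: "p \<in> PP \<Longrightarrow> q \<in> PP \<Longrightarrow> pa_le PA p q \<longleftrightarrow> p \<cdot> q = p \<and> q \<cdot> p = p"
  using pa_le_iff proj_le' by simp

lemma wpc: "weak_projection_category PA CC"
  unfolding weak_projection_category_def
  using biordered_CC projalg_PA pa_le_CC by (auto simp: lle_CC rle_CC)

lemma pc: "projection_category PA CC"
  unfolding projection_category_def
proof (intro conjI ballI impI wpc)
  fix a q x assume h: "a \<in> mor CC" "q \<in> pcar PA" "pa_le PA q (ccod CC a)" "x \<in> pcar PA"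
  then have a: "a \<in> S" "q \<in> PP" "x \<in> PP" and l: "q \<cdot> R a = q" "R a \<cdot> q = q" using pa_le_CC[of q "R a"] by auto
  have "rrest CC a q = a \<cdot> q" using rrest_eq a l by simp
  then show "Theta PA CC (rrest CC a q) x = th PA q (Theta PA CC a x)"
    using a by (simp add: Theta_eq)
next
  fix a p x assume h: "a \<in> mor CC" "p \<in> pcar PA" "pa_le PA p (cdom CC a)" "x \<in> pcar PA"
  then have a: "a \<in> S" "p \<in> PP" "x \<in> PP" and l: "p \<cdot> D a = p" "D a \<cdot> p = p" using pa_le_CC[of p "D a"] by auto
  have "lrest CC p a = p \<cdot> a" using lrest_eq a l by simp
  then show "Delta PA CC (lrest CC p a) x = dl PA p (Delta PA CC a x)"
    using a by (simp add: Delta_eq)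
qed

lemma chain_simps: "mor (chain_cat P) = {ps. is_path P ps \<and> chn ps = ps}"
  "cdom (chain_cat P) = (\<lambda>ps. [hd ps])" "ccod (chain_cat P) = (\<lambda>ps. [last ps])"
  "ccomp (chain_cat P) = (\<lambda>ps qs. chn (ps @ tl qs))"
  "lle (chain_cat P) ps qs = (is_path P ps \<and> chn ps = ps \<and> is_path P qs \<and> chn qs = qs \<and>
                     pa_le P (hd ps) (hd qs) \<and> ps = chn (lpath P (hd ps) qs))"
  "rle (chain_cat P) ps qs = (is_path P ps \<and> chn ps = ps \<and> is_path P qs \<and> chn qs = qs \<and>
                     pa_le P (last ps) (last qs) \<and> ps = chn (rpath P (last ps) qs))"
  by (simp_all only: chain_cat_def bicat.simps)

lemma eps_chn: "xs \<noteq> [] \<Longrightarrow> set xs \<subseteq> PP \<Longrightarrow> drc_eps m (chn xs) = pr m xs"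
proof -
  assume h: "xs \<noteq> []" "set xs \<subseteq> PP"
  have "drc_eps m (chn xs) = pr m (chn xs)" using h PS by (intro eps_pr) (auto simp: chn_def)
  also have "\<dots> = pr m xs" using h pr_remdups by (simp add: chn_def)
  finally show ?thesis .
qed

lemma eps_path: "is_path PA ps \<Longrightarrow> drc_eps m (chn ps) = pr m ps"
  using eps_chn by (simp add: is_path_def)

lemma eps_single[simp]: "drc_eps m [x] = x"
  by (simp add: drc_eps_def)

lemma path_S: "is_path PA ps \<Longrightarrow> set ps \<subseteq> S \<and> ps \<noteq> []"
  using PS by (auto simp: is_path_def)

lemma eval_map: "evaluation_map PA CC (drc_eps m)"
  unfolding evaluation_map_def biordered_functor_def
proof (intro conjI ballI allI impI)
  fix ps assume "ps \<in> mor (chain_cat PA)"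
  then have p: "is_path PA ps" and c: "chn ps = ps" by (auto simp: chain_simps)
  have e: "drc_eps m ps = pr m ps" using eps_path[OF p] c by simp
  show "drc_eps m ps \<in> mor CC" using e path_S[OF p] by simp
  show "drc_eps m (cdom (chain_cat PA) ps) = cdom CC (drc_eps m ps)" using e path_D[OF p] by (simp add: chain_simps)
  show "drc_eps m (ccod (chain_cat PA) ps) = ccod CC (drc_eps m ps)" using e path_R[OF p] by (simp add: chain_simps)
next
  fix ps qs assume "ps \<in> mor (chain_cat PA)" "qs \<in> mor (chain_cat PA)"
    and eq: "ccod (chain_cat PA) ps = cdom (chain_cat PA) qs"
  then have p: "is_path PA ps" "chn ps = ps" and q: "is_path PA qs" "chn qs = qs" by (auto simp: chain_simps)
  have l: "hd qs = last ps" using eq by (simp add: chain_simps)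
  have sp: "set ps \<subseteq> PP" "ps \<noteq> []" using p by (auto simp: is_path_def)
  have sq: "set qs \<subseteq> PP" "qs \<noteq> []" using q by (auto simp: is_path_def)
  have sq': "set (tl qs) \<subseteq> PP" using sq by (cases qs) auto
  have eps: "drc_eps m ps = pr m ps" "drc_eps m qs = pr m qs" using eps_path[OF p(1)] eps_path[OF q(1)] p(2) q(2) by simp_all
  have pS: "pr m ps \<in> S" using path_S[OF p(1)] by simp
  have Rp: "R (pr m ps) = last ps" using path_R[OF p(1)] .
  have "drc_eps m (chn (ps @ tl qs)) = pr m (ps @ tl qs)" using sp sq' by (intro eps_chn) auto
  also have "\<dots> = pr m ps \<cdot> pr m qs"
  proof (cases "tl qs = []")
    case True
    then have "qs = [last ps]" using sq l by (cases qs) auto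
    then show ?thesis using True Rr[OF pS] Rp by simp
  next
    case False
    have tS: "set (tl qs) \<subseteq> S" using sq' PS by auto
    have "pr m (ps @ tl qs) = pr m ps \<cdot> pr m (tl qs)" using False sp tS PS by (intro pr_append) auto
    moreover have "pr m qs = last ps \<cdot> pr m (tl qs)" using False sq l tS PS
      by (cases qs) (auto simp: pr_Cons)
    moreover have "pr m ps \<cdot> (R (pr m ps) \<cdot> pr m (tl qs)) = pr m ps \<cdot> pr m (tl qs)"
      using pS tS False by simp
    ultimately show ?thesis using Rp by simp
  qed
  finally show "drc_eps m (ccomp (chain_cat PA) ps qs) = ccomp CC (drc_eps m ps) (drc_eps m qs)"
    using eps by (simp add: chain_simps)
next
  fix ps qs assume h: "lle (chain_cat PA) ps qs"
  then have p: "is_path PA ps" "chn ps = ps" and q: "is_path PA qs" "chn qs = qs"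
    and le: "pa_le PA (hd ps) (hd qs)" and eqp: "ps = chn (lpath PA (hd ps) qs)"
    unfolding chain_simps by auto
  have eps: "drc_eps m ps = pr m ps" "drc_eps m qs = pr m qs" using eps_path[OF p(1)] eps_path[OF q(1)] p(2) q(2) by simp_all
  have hp: "hd ps \<in> PP" "hd qs \<in> PP" using p q by (auto simp: is_path_def)
  have sq: "set qs \<subseteq> PP" "qs \<noteq> []" using q by (auto simp: is_path_def)
  have pS: "pr m ps \<in> S" "pr m qs \<in> S" using path_S p q by auto
  have Dp: "D (pr m ps) = hd ps" "D (pr m qs) = hd qs" using path_D p q by auto
  have l1: "hd ps \<cdot> hd qs = hd ps" "hd qs \<cdot> hd ps = hd ps" using pa_le_CC le hp by auto
  have "pr m ps = pr m (chn (lpath PA (hd ps) qs))" using eqp by (rule arg_cong)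
  also have "\<dots> = pr m (lpath PA (hd ps) qs)"
    using lpath_set[of "hd ps" qs] lpath_ne[of "hd ps" qs] hp sq
    unfolding chn_def by (intro pr_remdups) auto
  finally have e1: "pr m ps = pr m (lpath PA (hd ps) qs)" .
  have "pr m ps = hd ps \<cdot> pr m ps" using Dl[OF pS(1)] Dp by simp
  also have "\<dots> = hd ps \<cdot> pr m (lpath PA (R (hd ps)) qs)" using e1 hp by simp
  also have "\<dots> = hd ps \<cdot> pr m qs" using lpath_pr[of "hd ps" qs] hp sq by simp
  finally have e2: "hd ps \<cdot> pr m qs = pr m ps" by simp
  show "lle CC (drc_eps m ps) (drc_eps m qs)"
    unfolding lle_CC eps Dp using pS l1 e2 by simp
next
  fix ps qs assume h: "rle (chain_cat PA) ps qs"
  then have p: "is_path PA ps" "chn ps = ps" and q: "is_path PA qs" "chn qs = qs"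
    and le: "pa_le PA (last ps) (last qs)" and eqp: "ps = chn (rpath PA (last ps) qs)"
    unfolding chain_simps by auto
  have eps: "drc_eps m ps = pr m ps" "drc_eps m qs = pr m qs" using eps_path[OF p(1)] eps_path[OF q(1)] p(2) q(2) by simp_all
  have hp: "last ps \<in> PP" "last qs \<in> PP" using p q by (auto simp: is_path_def)
  have sq: "set qs \<subseteq> PP" "qs \<noteq> []" using q by (auto simp: is_path_def)
  have pS: "pr m ps \<in> S" "pr m qs \<in> S" using path_S p q by auto
  have Rp: "R (pr m ps) = last ps" "R (pr m qs) = last qs" using path_R p q by auto
  have l1: "last ps \<cdot> last qs = last ps" "last qs \<cdot> last ps = last ps" using pa_le_CC le hp by auto
  have sr: "set (rev (lpathD PA (last ps) (rev qs))) \<subseteq> PP" "rev (lpathD PA (last ps) (rev qs)) \<noteq> []"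
    using lpathD_set[of "last ps" "rev qs"] lpathD_ne[of "last ps" "rev qs"] hp sq by auto
  have "pr m ps = pr m (chn (rpath PA (last ps) qs))" using eqp by (rule arg_cong)
  also have "\<dots> = pr m (rev (lpathD PA (last ps) (rev qs)))"
    using sr pr_remdups[of "rev (lpathD PA (last ps) (rev qs))"] by (simp add: chn_def rpath_def del: remdups_adj_rev)
  finally have e1: "pr m ps = pr m (rev (lpathD PA (last ps) (rev qs)))" .
  have "pr m ps = pr m ps \<cdot> last ps" using Rr[OF pS(1)] Rp by simp
  also have "\<dots> = pr m (rev (lpathD PA (D (last ps)) (rev qs))) \<cdot> last ps" using e1 hp by simp
  also have "\<dots> = pr m (rev (rev qs)) \<cdot> last ps" using lpathD_pr[of "last ps" "rev qs"] hp sq by simp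
  finally have e2: "pr m qs \<cdot> last ps = pr m ps" by simp
  show "rle CC (drc_eps m ps) (drc_eps m qs)"
    unfolding rle_CC eps Rp using pS l1 e2 by simp
next
  fix p assume "p \<in> pcar PA"
  then show "drc_eps m [p] = p" by simp
qed

end

context drcl begin

lemma eps2: "x \<in> PP \<Longrightarrow> y \<in> PP \<Longrightarrow> drc_eps m (chn [x, y]) = x \<cdot> y"
  using eps_chn[of "[x, y]"] by simp

lemma lam_eq:
  assumes b: "b \<in> S" and p: "p \<in> PP" and s: "s \<in> PP"
  shows "lam PA CC (drc_eps m) p b s = p \<cdot> (b \<cdot> s)"
proof -
  define t where "t = R (p \<cdot> b)"
  define r0 where "r0 = R (p \<cdot> D b)"
  define u where "u = r0 \<cdot> b"
  define e1 where "e1 = D (u \<cdot> s)"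
  define e where "e = D (p \<cdot> e1)"
  define f1 where "f1 = D (t \<cdot> s)"
  define f where "f = R (t \<cdot> s)"
  have mem: "t \<in> PP" "r0 \<in> PP" "u \<in> S" "e1 \<in> PP" "e \<in> PP" "f1 \<in> PP" "f \<in> PP"
    "p \<in> S" "s \<in> S"
    using b p s by (simp_all add: t_def r0_def u_def e1_def e_def f1_def f_def)
  have pus: "p \<cdot> (u \<cdot> s) = p \<cdot> (b \<cdot> s)"
    using b p s aRap2[of p "D b" "b \<cdot> s"] by (simp add: u_def r0_def)
  have E: "dl PA p (Delta PA CC b s) = e"
  proof -
    have "dl PA p (Delta PA CC b s) = D (p \<cdot> (b \<cdot> s))" using b p s by (simp add: Delta_eq)
    also have "\<dots> = D (p \<cdot> (u \<cdot> s))" using pus by simp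
    also have "\<dots> = e" using mem by (simp add: e_def e1_def)
    finally show ?thesis .
  qed
  have E1: "dl PA (th PA (D b) p) (Delta PA CC b s) = e1"
    using b p s by (simp add: Delta_eq e1_def u_def r0_def)
  have F: "th PA s (Theta PA CC b p) = f"
    using b p s by (simp add: Theta_eq f_def t_def)
  have F1: "dl PA (Theta PA CC b p) s = f1"
    using b p s by (simp add: Theta_eq f1_def t_def)
  have Lr: "lrest CC (th PA (D b) p) b = u"
  proof -
    have "lrest CC (r0) b = r0 \<cdot> b"
      using b p Rap_le1[of p "D b"] Rap_le2[of p "D b"] mem by (intro lrest_eq) (auto simp: r0_def)
    then show ?thesis using b p by (simp add: r0_def u_def)
  qed
  have Ru: "R u = t"
    using b p by (simp add: u_def r0_def t_def)
  have Rr': "rrest CC u f1 = u \<cdot> f1"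
    using Dpa_le1[of s t] Dpa_le2[of s t] mem Ru by (intro rrest_eq) (auto simp: f1_def)
  have L: "lam PA CC (drc_eps m) p b s = (drc_eps m (chn [e, e1]) \<cdot> (u \<cdot> f1)) \<cdot> drc_eps m (chn [f1, f])"
    unfolding lam_def Let_def CC_simps E E1 F F1 Lr Rr' by (rule refl)
  have ee1: "e \<cdot> e1 = p \<cdot> e1" using Dpaa[of e1 p] mem p by (simp add: e_def)
  have f1f: "f1 \<cdot> f = t \<cdot> s" using DRprod[of t s] mem s by (simp add: f1_def f_def)
  have e1D: "e1 \<cdot> (u \<cdot> s) = u \<cdot> s" using Dl[of "u \<cdot> s"] mem by (simp add: e1_def del: assoc)
  have f1ts: "f1 \<cdot> (t \<cdot> s) = t \<cdot> s"
  proof -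
    have "f1 \<cdot> (t \<cdot> s) = f1 \<cdot> (f1 \<cdot> f)" by (simp only: f1f)
    also have "\<dots> = f1 \<cdot> f" using mem by simp
    also have "\<dots> = t \<cdot> s" by (rule f1f)
    finally show ?thesis .
  qed
  have "lam PA CC (drc_eps m) p b s = ((e \<cdot> e1) \<cdot> (u \<cdot> f1)) \<cdot> (f1 \<cdot> f)"
    using L eps2 mem by simp
  also have "\<dots> = ((p \<cdot> e1) \<cdot> (u \<cdot> f1)) \<cdot> (t \<cdot> s)" by (simp only: ee1 f1f)
  also have "\<dots> = (p \<cdot> e1) \<cdot> (u \<cdot> (f1 \<cdot> (t \<cdot> s)))" using mem by simp
  also have "\<dots> = (p \<cdot> e1) \<cdot> (u \<cdot> (t \<cdot> s))" by (simp only: f1ts)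
  also have "\<dots> = (p \<cdot> e1) \<cdot> (u \<cdot> s)" using Rr2[of u s] Ru mem by simp
  also have "\<dots> = p \<cdot> (e1 \<cdot> (u \<cdot> s))" using mem by simp
  also have "\<dots> = p \<cdot> (u \<cdot> s)" by (simp only: e1D)
  also have "\<dots> = p \<cdot> (b \<cdot> s)" by (rule pus)
  finally show ?thesis .
qed

lemma rho_eq:
  assumes b: "b \<in> S" and p: "p \<in> PP" and s: "s \<in> PP"
  shows "rho PA CC (drc_eps m) p b s = p \<cdot> (b \<cdot> s)"
proof -
  define z where "z = D (b \<cdot> s)"
  define d where "d = D (R b \<cdot> s)"
  define e where "e = D (p \<cdot> z)"
  define e2 where "e2 = R (p \<cdot> z)"
  define w where "w = p \<cdot> (b \<cdot> d)"
  define f2 where "f2 = R w"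
  define f where "f = R (f2 \<cdot> s)"
  have mem: "z \<in> PP" "d \<in> PP" "e \<in> PP" "e2 \<in> PP" "w \<in> S" "f2 \<in> PP" "f \<in> PP"
    "p \<in> S" "s \<in> S"
    using b p s by (simp_all add: z_def d_def e_def e2_def w_def f2_def f_def)
  have ds: "d \<cdot> s = R b \<cdot> s" using Dpaa[of s "R b"] b s by (simp add: d_def)
  have bds: "b \<cdot> (d \<cdot> s) = b \<cdot> s" using ds b s by simp
  have Dbd: "D (b \<cdot> d) = z" using b s by (simp add: d_def z_def)
  have E: "dl PA p (Delta PA CC b s) = e"
    using b p s by (simp add: Delta_eq e_def z_def)
  have E2: "th PA (Delta PA CC b s) p = e2"
    using b p s by (simp add: Delta_eq e2_def z_def)
  have F: "th PA s (Theta PA CC b p) = f"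
  proof -
    have "th PA s (Theta PA CC b p) = R (p \<cdot> (b \<cdot> s))" using b p s by (simp add: Theta_eq)
    also have "\<dots> = R (p \<cdot> (b \<cdot> (d \<cdot> s)))" by (simp only: bds)
    also have "\<dots> = f" using b p s mem by (simp add: f_def f2_def w_def)
    finally show ?thesis .
  qed
  have F2: "th PA (dl PA (R b) s) (Theta PA CC b p) = f2"
    using b p s by (simp add: Theta_eq f2_def w_def d_def)
  have Rr': "rrest CC b (dl PA (R b) s) = b \<cdot> d"
  proof -
    have "rrest CC b d = b \<cdot> d"
      using Dpa_le1[of s "R b"] Dpa_le2[of s "R b"] mem b by (intro rrest_eq) (auto simp: d_def)
    then show ?thesis by (simp add: d_def)
  qed
  have Lr: "lrest CC e2 (b \<cdot> d) = e2 \<cdot> (b \<cdot> d)"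
    using Rap_le1[of p z] Rap_le2[of p z] mem b Dbd by (intro lrest_eq) (auto simp: e2_def)
  have L: "rho PA CC (drc_eps m) p b s = (drc_eps m (chn [e, e2]) \<cdot> (e2 \<cdot> (b \<cdot> d))) \<cdot> drc_eps m (chn [f2, f])"
    unfolding rho_def Let_def CC_simps E E2 F F2 Rr' Lr by (rule refl)
  have ee2: "e \<cdot> e2 = p \<cdot> z" using DRprod[of p z] mem p by (simp add: e_def e2_def)
  have f2f: "f2 \<cdot> f = f2 \<cdot> s" using aRap[of f2 s] mem s by (simp add: f_def)
  have s1: "(p \<cdot> z) \<cdot> e2 = p \<cdot> z" unfolding e2_def using mem by (simp del: assoc)
  have zbd: "z \<cdot> (b \<cdot> d) = b \<cdot> d"
  proof -
    have "z \<cdot> (b \<cdot> d) = D (b \<cdot> d) \<cdot> (b \<cdot> d)" by (simp only: Dbd)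
    also have "\<dots> = b \<cdot> d" using mem b by (simp del: assoc)
    finally show ?thesis .
  qed
  have "rho PA CC (drc_eps m) p b s = ((e \<cdot> e2) \<cdot> (e2 \<cdot> (b \<cdot> d))) \<cdot> (f2 \<cdot> f)"
    using L eps2 mem by simp
  also have "\<dots> = ((p \<cdot> z) \<cdot> (e2 \<cdot> (b \<cdot> d))) \<cdot> (f2 \<cdot> s)" by (simp only: ee2 f2f)
  also have "\<dots> = (((p \<cdot> z) \<cdot> e2) \<cdot> (b \<cdot> d)) \<cdot> (f2 \<cdot> s)" using mem b by simp
  also have "\<dots> = ((p \<cdot> z) \<cdot> (b \<cdot> d)) \<cdot> (f2 \<cdot> s)" by (simp only: s1)
  also have "\<dots> = (p \<cdot> (z \<cdot> (b \<cdot> d))) \<cdot> (f2 \<cdot> s)" using mem b by simp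
  also have "\<dots> = w \<cdot> (f2 \<cdot> s)" by (simp only: zbd w_def)
  also have "\<dots> = w \<cdot> s" using Rr2[of w s] mem by (simp add: f2_def)
  also have "\<dots> = p \<cdot> (b \<cdot> (d \<cdot> s))" using mem b by (simp add: w_def)
  also have "\<dots> = p \<cdot> (b \<cdot> s)" by (simp only: bds)
  finally show ?thesis .
qed

lemma cpc: "chained_projection_category PA CC (drc_eps m)"
  unfolding chained_projection_category_def
  using pc eval_map lam_eq rho_eq by simp

end


lemma pr_map_hom:
  assumes hS: "\<forall>a\<in>S. \<phi> a \<in> S'" and hm: "\<forall>a\<in>S. \<forall>b\<in>S. \<phi> (m a b) = m' (\<phi> a) (\<phi> b)"
    and drc: "drc S m D R"
  shows "xs \<noteq> [] \<Longrightarrow> set xs \<subseteq> S \<Longrightarrow> \<phi> (pr m xs) = pr m' (map \<phi> xs)"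
proof (induction xs)
  case (Cons x xs)
  interpret A: drcl S m D R by (rule drcl.intro[OF drc])
  show ?case
  proof (cases "xs = []")
    case True then show ?thesis by simp
  next
    case False
    then obtain y ys where xs: "xs = y # ys" by (cases xs) auto
    have "pr m xs \<in> S" using Cons.prems False by simp
    then show ?thesis using Cons xs hm by simp
  qed
qed simp

lemma functor_part:
  assumes d1: "drc S m D R" and d2: "drc S' m' D' R'" and h: "drc_morphism S m D R S' m' D' R' \<phi>"
  shows "chained_projection_functor (drc_proj S m D R) (drc_cat S m D R) (drc_eps m)
           (drc_proj S' m' D' R') (drc_cat S' m' D' R') (drc_eps m') \<phi>"
proof -
  interpret A: drcl S m D R by (rule drcl.intro[OF d1])
  interpret B: drcl S' m' D' R' by (rule drcl.intro[OF d2])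
  have hS: "\<forall>a\<in>S. \<phi> a \<in> S'" and hm: "\<forall>a\<in>S. \<forall>b\<in>S. \<phi> (m a b) = m' (\<phi> a) (\<phi> b)"
    and hD: "\<forall>a\<in>S. \<phi> (D a) = D' (\<phi> a)" and hR: "\<forall>a\<in>S. \<phi> (R a) = R' (\<phi> a)"
    using h unfolding drc_morphism_def by auto
  have bf: "biordered_functor A.CC B.CC \<phi>"
    unfolding biordered_functor_def
  proof (intro conjI ballI allI impI)
    fix a assume "a \<in> mor A.CC" then have a: "a \<in> S" by simp
    show "\<phi> a \<in> mor B.CC" using a hS by simp
    show "\<phi> (cdom A.CC a) = cdom B.CC (\<phi> a)" using a hD by simp
    show "\<phi> (ccod A.CC a) = ccod B.CC (\<phi> a)" using a hR by simp
  next
    fix a b assume "a \<in> mor A.CC" "b \<in> mor A.CC"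
    then show "\<phi> (ccomp A.CC a b) = ccomp B.CC (\<phi> a) (\<phi> b)" using hm by simp
  next
    fix a b assume "lle A.CC a b"
    then have a: "a \<in> S" "b \<in> S" and e1: "m (D a) (D b) = D a" and e2: "m (D b) (D a) = D a"
      and e3: "m (D a) b = a" unfolding A.lle_CC by auto
    have 1: "m' (D' (\<phi> a)) (D' (\<phi> b)) = D' (\<phi> a)" using arg_cong[OF e1, of \<phi>] a hm hD by simp
    have 2: "m' (D' (\<phi> b)) (D' (\<phi> a)) = D' (\<phi> a)" using arg_cong[OF e2, of \<phi>] a hm hD by simp
    have 3: "m' (D' (\<phi> a)) (\<phi> b) = \<phi> a" using arg_cong[OF e3, of \<phi>] a hm hD by simp
    show "lle B.CC (\<phi> a) (\<phi> b)" unfolding B.lle_CC using 1 2 3 a hS by simp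
  next
    fix a b assume "rle A.CC a b"
    then have a: "a \<in> S" "b \<in> S" and e1: "m (R a) (R b) = R a" and e2: "m (R b) (R a) = R a"
      and e3: "m b (R a) = a" unfolding A.rle_CC by auto
    have 1: "m' (R' (\<phi> a)) (R' (\<phi> b)) = R' (\<phi> a)" using arg_cong[OF e1, of \<phi>] a hm hR by simp
    have 2: "m' (R' (\<phi> b)) (R' (\<phi> a)) = R' (\<phi> a)" using arg_cong[OF e2, of \<phi>] a hm hR by simp
    have 3: "m' (\<phi> b) (R' (\<phi> a)) = \<phi> a" using arg_cong[OF e3, of \<phi>] a hm hR by simp
    show "rle B.CC (\<phi> a) (\<phi> b)" unfolding B.rle_CC using 1 2 3 a hS by simp
  qed
  have PP: "p \<in> A.PP \<Longrightarrow> \<phi> p \<in> B.PP" for p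
  proof -
    assume p: "p \<in> A.PP"
    have e: "\<phi> (D p) = D' (\<phi> p)" using bspec[OF hD A.PS[OF p]] .
    then have "D' (\<phi> p) = \<phi> p" using A.PD[OF p] by metis
    moreover have "\<phi> p \<in> S'" using hS A.PS[OF p] by blast
    ultimately show ?thesis using B.P_iff by blast
  qed
  have pm: "projalg_morphism A.PA B.PA \<phi>"
    unfolding projalg_morphism_def using PP hm hD hR by simp
  have ch: "\<phi> (drc_eps m (chn ps)) = drc_eps m' (chn (map \<phi> ps))" if p: "is_path A.PA ps" for ps
  proof -
    have s: "set ps \<subseteq> A.PP" "ps \<noteq> []" using p by (auto simp: is_path_def)
    have "\<phi> (drc_eps m (chn ps)) = \<phi> (pr m ps)" using A.eps_path[OF p] by simp
    also have "\<dots> = pr m' (map \<phi> ps)" using pr_map_hom[OF hS hm d1] s A.PPS[OF s(1)] by blast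
    also have "\<dots> = drc_eps m' (chn (map \<phi> ps))" using s PP by (intro B.eps_chn[symmetric]) auto
    finally show ?thesis .
  qed
  show ?thesis unfolding chained_projection_functor_def using bf pm ch by blast
qed

theorem theorem5p15:
  fixes S :: "'a set" and m :: "'a \<Rightarrow> 'a \<Rightarrow> 'a" and D R :: "'a \<Rightarrow> 'a"
    and S' :: "'b set" and m' :: "'b \<Rightarrow> 'b \<Rightarrow> 'b" and D' R' :: "'b \<Rightarrow> 'b"
    and \<phi> :: "'a \<Rightarrow> 'b"
  assumes "drc S m D R"
  shows "chained_projection_category (drc_proj S m D R) (drc_cat S m D R) (drc_eps m) \<and>
         (drc S' m' D' R' \<longrightarrow> drc_morphism S m D R S' m' D' R' \<phi> \<longrightarrow>
         chained_projection_functor (drc_proj S m D R) (drc_cat S m D R) (drc_eps m)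
                                    (drc_proj S' m' D' R') (drc_cat S' m' D' R') (drc_eps m') \<phi>)"
proof -
  interpret A: drcl S m D R by (rule drcl.intro[OF assms])
  show ?thesis using A.cpc functor_part[OF assms] by blast
qed


end
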